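(* Assume (A1) all matrices of the dynamics and cost are independent of $n$; (A6) the initial local states $x^1_1,\dots,x^n_1$ are independent with a common mean $\mu_x$ (bounded, independent of $n$), for each $t$ the local noises $w^1_t,\dots,w^n_t$ are independent, and $\mathrm{Var}(x^i_1),\mathrm{Var}(w^i_t)$ are bounded and independent of $n$; (A7) the weights are asymptotically vanishing and there is $n_0$ such that for every $n\ge n_0$ the subgame perfect Nash equilibrium $\mathbf g^*_n$ exists, is unique and has the form $u^i_t=\theta^n_tx^i_t+(\bar\theta^n_t-\theta^n_t)\bar x_t$ with $\theta^n_t,\bar\theta^n_t$ uniformly bounded in $n$ and converging to $\theta^\infty_t,\bar\theta^\infty_t$. Then for every $t_0\in\mathbb N_T$, $\lim_{n\to\infty}\Delta J_P(\hat{\mathbf g}_n,\mathbf g^*_n)_{t_0}=0$ and $\lim_{n\to\infty}\Delta J_P(\hat{\mathbf g}_\infty,\mathbf g^*_n)_{t_0}=0$.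
   Context: Fix $T\ge1$, $d_x,d_u\ge1$, $n\ge2$; $\mathbb N_k=\{1,\dots,k\}$. Player $i\in\mathbb N_n$ has state $x^i_t\in\mathbb R^{d_x}$, action $u^i_t\in\mathbb R^{d_u}$, noise $w^i_t\in\mathbb R^{d_x}$; $\mathbf x_t=(x^1_t,\dots,x^n_t)$. Real weights $\alpha^i_n$, $\sum_i\alpha^i_n=1$; asymptotically vanishing means there exist $n_0$, $\gamma_{\max}>0$ with $\alpha^i_n=\gamma^i/n$, $\gamma^i\in[-\gamma_{\max},\gamma_{\max}]$, for $n>n_0$. $\bar x_t=\sum_i\alpha^i_nx^i_t$, $\bar u_t=\sum_i\alpha^i_nu^i_t$. Dynamics $x^i_{t+1}=A_tx^i_t+B_tu^i_t+\bar A_t\bar x_t+\bar B_t\bar u_t+w^i_t$; zero-mean noises; $\mathbf x_1,\mathbf w_1,\dots,\mathbf w_T$ mutually independent with covariances bounded by constant matrices. Per-step cost $c^i_t=(x^i_t)^\top Q_tx^i_t+2(x^i_t)^\top S^x_t\bar x_t+\bar x_t^\top\bar Q_t\bar x_t+(u^i_t)^\top R_tu^i_t+2(u^i_t)^\top S^u_t\bar u_t+\bar u_t^\top\bar R_t\bar u_t+\sum_j\alpha^j_n((x^j_t)^\top G^x_tx^j_t+(u^j_t)^\top G^u_tu^j_t)$, symmetric matrices; $J^i_n(\mathbf g)_{t_0}=\mathbb E^{\mathbf g}[\sum_{t=t_0}^Tc^i_t]$. Subgame perfect Nash equilibrium: a profile of perfect-sharing strategies ($u^i_t=g^i_t(\mathbf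 x_{1:t})$) from which no player can lower $J^i_n(\cdot)_{t_0}$ at any $t_0$ by a unilateral perfect-sharing deviation. Predictions: $z^n_1=z^\infty_1=\mathbb E[\bar x_1]$, $z^n_{t+1}=(A_t+\bar A_t+(B_t+\bar B_t)\bar\theta^n_t)z^n_t$, $z^\infty_{t+1}=(A_t+\bar A_t+(B_t+\bar B_t)\bar\theta^\infty_t)z^\infty_t$. The no-sharing profile $\hat{\mathbf g}_n$ (SAPDE) is $\hat u^i_t=\theta^n_t\hat x^i_t+(\bar\theta^n_t-\theta^n_t)z^n_t$, and $\hat{\mathbf g}_\infty$ (SWMFE) is $\hat u^i_t=\theta^\infty_t\hat x^i_t+(\bar\theta^\infty_t-\theta^\infty_t)z^\infty_t$, where $\hat x^i_t$ is the state of player $i$ under that profile (same initial states and noises, same dynamics). Performance gap: $\Delta J_P(\hat{\mathbf g},\mathbf g^*_n)_{t_0}=\max_{i\in\mathbb N_n}|J^i_n(\hat{\mathbf g})_{t_0}-J^i_n(\mathbf g^*_n)_{t_0}|$. *)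

theory Defs
  imports "HOL-Probability.Probability"
begin

text \<open>Model data (A1: independent of the number of players n).
  Vectors in R^{d_x}, R^{d_u} are real^'x, real^'u; a d1 x d2 matrix is real^'d2^'d1.\<close>

record ('x::finite, 'u::finite) lqm =
  mA  :: "nat \<Rightarrow> real^'x^'x"
  mB  :: "nat \<Rightarrow> real^'u^'x"
  mAb :: "nat \<Rightarrow> real^'x^'x"
  mBb :: "nat \<Rightarrow> real^'u^'x"
  mQ  :: "nat \<Rightarrow> real^'x^'x"
  mSx :: "nat \<Rightarrow> real^'x^'x"
  mQb :: "nat \<Rightarrow> real^'x^'x"
  mR  :: "nat \<Rightarrow> real^'u^'u"
  mSu :: "nat \<Rightarrow> real^'u^'u"
  mRb :: "nat \<Rightarrow> real^'u^'u"
  mGx :: "nat \<Rightarrow> real^'x^'x"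
  mGu :: "nat \<Rightarrow> real^'u^'u"

text \<open>A history H s j = state of player j at time s (for s \<le> t, j \<in> {1..n}; zero otherwise).
  A perfect-sharing strategy profile: g i t H = action of player i at time t given history x_{1:t}.\<close>
type_synonym ('x, 'u) strat = "nat \<Rightarrow> nat \<Rightarrow> (nat \<Rightarrow> nat \<Rightarrow> real^'x) \<Rightarrow> real^'u"

definition wavg :: "nat \<Rightarrow> (nat \<Rightarrow> real) \<Rightarrow> (nat \<Rightarrow> 'a::real_vector) \<Rightarrow> 'a" where
  "wavg n a f = (\<Sum>k\<in>{1..n}. a k *\<^sub>R f k)"

definition next_state ::
  "('x::finite,'u::finite) lqm \<Rightarrow> nat \<Rightarrow> (nat \<Rightarrow> real) \<Rightarrow> ('x,'u) strat \<Rightarrow> (nat \<Rightarrow> nat \<Rightarrow> real^'x)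
   \<Rightarrow> nat \<Rightarrow> (nat \<Rightarrow> nat \<Rightarrow> real^'x) \<Rightarrow> nat \<Rightarrow> real^'x" where
  "next_state m n a g w t H j =
     mA m t *v H t j + mB m t *v g j t H + mAb m t *v wavg n a (H t)
     + mBb m t *v wavg n a (\<lambda>k. g k t H) + w t j"

primrec hist ::
  "('x::finite,'u::finite) lqm \<Rightarrow> nat \<Rightarrow> (nat \<Rightarrow> real) \<Rightarrow> ('x,'u) strat \<Rightarrow> (nat \<Rightarrow> real^'x)
   \<Rightarrow> (nat \<Rightarrow> nat \<Rightarrow> real^'x) \<Rightarrow> nat \<Rightarrow> nat \<Rightarrow> nat \<Rightarrow> real^'x" where
  "hist m n a g x1 w 0 = (\<lambda>s j. 0)"
| "hist m n a g x1 w (Suc t) =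
     (\<lambda>s j. if s \<le> t then hist m n a g x1 w t s j
            else if s = Suc t \<and> j \<in> {1..n} then
              (if t = 0 then x1 j else next_state m n a g w t (hist m n a g x1 w t) j)
            else 0)"

definition stage_cost ::
  "('x::finite,'u::finite) lqm \<Rightarrow> nat \<Rightarrow> (nat \<Rightarrow> real) \<Rightarrow> nat \<Rightarrow> nat
   \<Rightarrow> (nat \<Rightarrow> real^'x) \<Rightarrow> (nat \<Rightarrow> real^'u) \<Rightarrow> real" where
  "stage_cost m n a t i X U =
     (let xb = wavg n a X; ub = wavg n a U in
       X i \<bullet> (mQ m t *v X i) + 2 * (X i \<bullet> (mSx m t *v xb)) + xb \<bullet> (mQb m t *v xb)
     + U i \<bullet> (mR m t *v U i) + 2 * (U i \<bullet> (mSu m t *v ub)) + ub \<bullet> (mRb m t *v ub)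
     + (\<Sum>j\<in>{1..n}. a j * (X j \<bullet> (mGx m t *v X j) + U j \<bullet> (mGu m t *v U j))))"

definition cost_from ::
  "('x::finite,'u::finite) lqm \<Rightarrow> nat \<Rightarrow> nat \<Rightarrow> (nat \<Rightarrow> real) \<Rightarrow> ('x,'u) strat \<Rightarrow> (nat \<Rightarrow> real^'x)
   \<Rightarrow> (nat \<Rightarrow> nat \<Rightarrow> real^'x) \<Rightarrow> nat \<Rightarrow> nat \<Rightarrow> real" where
  "cost_from m T n a g x1 w t0 i =
     (\<Sum>t\<in>{t0..T}. stage_cost m n a t i (\<lambda>j. hist m n a g x1 w t t j)
                                        (\<lambda>j. g j t (hist m n a g x1 w t)))"

definition rcost ::
  "('x::finite,'u::finite) lqm \<Rightarrow> nat \<Rightarrow> nat \<Rightarrow> (nat \<Rightarrow> real) \<Rightarrow> (nat \<Rightarrow> 'w \<Rightarrow> real^'x)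
   \<Rightarrow> (nat \<Rightarrow> nat \<Rightarrow> 'w \<Rightarrow> real^'x) \<Rightarrow> ('x,'u) strat \<Rightarrow> nat \<Rightarrow> nat \<Rightarrow> 'w \<Rightarrow> real" where
  "rcost m T n a x1 w g t0 i \<omega> = cost_from m T n a g (\<lambda>j. x1 j \<omega>) (\<lambda>t j. w t j \<omega>) t0 i"

definition Jcost ::
  "('x::finite,'u::finite) lqm \<Rightarrow> nat \<Rightarrow> nat \<Rightarrow> (nat \<Rightarrow> real) \<Rightarrow> 'w measure \<Rightarrow> (nat \<Rightarrow> 'w \<Rightarrow> real^'x)
   \<Rightarrow> (nat \<Rightarrow> nat \<Rightarrow> 'w \<Rightarrow> real^'x) \<Rightarrow> ('x,'u) strat \<Rightarrow> nat \<Rightarrow> nat \<Rightarrow> real" where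
  "Jcost m T n a M x1 w g t0 i = (\<integral>\<omega>. rcost m T n a x1 w g t0 i \<omega> \<partial>M)"

definition is_SPNE ::
  "('x::finite,'u::finite) lqm \<Rightarrow> nat \<Rightarrow> nat \<Rightarrow> (nat \<Rightarrow> real) \<Rightarrow> 'w measure \<Rightarrow> (nat \<Rightarrow> 'w \<Rightarrow> real^'x)
   \<Rightarrow> (nat \<Rightarrow> nat \<Rightarrow> 'w \<Rightarrow> real^'x) \<Rightarrow> ('x,'u) strat \<Rightarrow> bool" where
  "is_SPNE m T n a M x1 w g \<longleftrightarrow>
     (\<forall>t0\<in>{1..T}. \<forall>i\<in>{1..n}.
        integrable M (rcost m T n a x1 w g t0 i) \<and>
        (\<forall>h. (\<forall>t<t0. h t = g i t) \<longrightarrow> integrable M (rcost m T n a x1 w (g(i := h)) t0 i) \<longrightarrow>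
             Jcost m T n a M x1 w g t0 i \<le> Jcost m T n a M x1 w (g(i := h)) t0 i))"

definition lin_profile :: "nat \<Rightarrow> (nat \<Rightarrow> real) \<Rightarrow> (nat \<Rightarrow> real^'x^'u) \<Rightarrow> (nat \<Rightarrow> real^'x^'u)
   \<Rightarrow> ('x::finite,'u::finite) strat" where
  "lin_profile n a th thb = (\<lambda>i t H. th t *v H t i + (thb t - th t) *v wavg n a (H t))"

definition noshare_profile :: "(nat \<Rightarrow> real^'x^'u) \<Rightarrow> (nat \<Rightarrow> real^'x^'u) \<Rightarrow> (nat \<Rightarrow> real^'x)
   \<Rightarrow> ('x::finite,'u::finite) strat" where
  "noshare_profile th thb z = (\<lambda>i t H. th t *v H t i + (thb t - th t) *v z t)"

primrec zpred :: "('x::finite,'u::finite) lqm \<Rightarrow> (nat \<Rightarrow> real^'x^'u) \<Rightarrow> real^'x \<Rightarrow> nat \<Rightarrow> real^'x" where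
  "zpred m thb z1 0 = 0"
| "zpred m thb z1 (Suc t) =
     (if t = 0 then z1 else (mA m t + mAb m t + (mB m t + mBb m t) ** thb t) *v zpred m thb z1 t)"

definition init_mean :: "nat \<Rightarrow> (nat \<Rightarrow> real) \<Rightarrow> 'w measure \<Rightarrow> (nat \<Rightarrow> 'w \<Rightarrow> real^'x::finite) \<Rightarrow> real^'x" where
  "init_mean n a M x1 = wavg n a (\<lambda>i. \<integral>\<omega>. x1 i \<omega> \<partial>M)"

definition gapJ ::
  "('x::finite,'u::finite) lqm \<Rightarrow> nat \<Rightarrow> nat \<Rightarrow> (nat \<Rightarrow> real) \<Rightarrow> 'w measure \<Rightarrow> (nat \<Rightarrow> 'w \<Rightarrow> real^'x)
   \<Rightarrow> (nat \<Rightarrow> nat \<Rightarrow> 'w \<Rightarrow> real^'x) \<Rightarrow> ('x,'u) strat \<Rightarrow> ('x,'u) strat \<Rightarrow> nat \<Rightarrow> real" where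
  "gapJ m T n a M x1 w g1 g2 t0 =
     Max ((\<lambda>i. \<bar>Jcost m T n a M x1 w g1 t0 i - Jcost m T n a M x1 w g2 t0 i\<bar>) ` {1..n})"

definition prim_rv :: "(nat \<Rightarrow> 'w \<Rightarrow> 'v) \<Rightarrow> (nat \<Rightarrow> nat \<Rightarrow> 'w \<Rightarrow> 'v) \<Rightarrow> nat \<times> nat \<Rightarrow> 'w \<Rightarrow> 'v" where
  "prim_rv x1 w = (\<lambda>(t, i). if t = 0 then x1 i else w t i)"

end

theory Submission
  imports Defs "HOL-Probability.Probability"
begin

lemma norm_mv: fixes A :: "real^'n^'m" shows "norm (A *v x) \<le> norm A * norm x"
proof -
  have h: "\<And>i. \<bar>(A *v x) $ i\<bar> \<le> norm (A $ i) * norm x"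
    by (metis Cauchy_Schwarz_ineq2 matrix_vector_mul_component)
  have "(norm (A *v x))\<^sup>2 = (\<Sum>i\<in>UNIV. ((A *v x) $ i)\<^sup>2)"
    by (simp add: norm_vec_def L2_set_def sum_nonneg)
  also have "\<dots> \<le> (\<Sum>i\<in>UNIV. (norm (A $ i) * norm x)\<^sup>2)"
    apply (rule sum_mono) using h by (metis abs_ge_zero power2_abs power_mono)
  also have "\<dots> = (norm A * norm x)\<^sup>2"
    by (simp add: norm_vec_def L2_set_def sum_nonneg power_mult_distrib sum_distrib_right)
  finally show ?thesis
    by (meson mult_nonneg_nonneg norm_ge_zero power2_le_imp_le)
qed

lemma sq_add_le: "(norm (a + b :: 'a::real_normed_vector))\<^sup>2 \<le> 2 * (norm a)\<^sup>2 + 2 * (norm b)\<^sup>2"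
proof -
  have "norm (a+b) \<le> norm a + norm b" by (rule norm_triangle_ineq)
  hence "(norm (a+b))\<^sup>2 \<le> (norm a + norm b)\<^sup>2" by (simp add: power_mono)
  also have "\<dots> \<le> 2 * (norm a)\<^sup>2 + 2 * (norm b)\<^sup>2"
    by (smt (verit) sum_squares_bound power2_sum)
  finally show ?thesis .
qed

lemma sq_mv_le: fixes A :: "real^'n^'m" shows "(norm (A *v x))\<^sup>2 \<le> (norm A)\<^sup>2 * (norm x)\<^sup>2"
  by (metis norm_ge_zero norm_mv power_mono power_mult_distrib)

lemma bound_int:
  fixes f g :: "'w \<Rightarrow> real"
  assumes "integrable P f" "g \<in> borel_measurable P" "\<And>\<omega>. \<omega> \<in> space P \<Longrightarrow> \<bar>g \<omega>\<bar> \<le> f \<omega>"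
  shows "integrable P g" "(\<integral>\<omega>. g \<omega> \<partial>P) \<le> (\<integral>\<omega>. f \<omega> \<partial>P)" "(\<integral>\<omega>. \<bar>g \<omega>\<bar> \<partial>P) \<le> (\<integral>\<omega>. f \<omega> \<partial>P)"
proof -
  show gi: "integrable P g"
    by (rule Bochner_Integration.integrable_bound[OF assms(1,2)]) (use assms(3) in \<open>auto intro!: AE_I2 intro: order_trans[OF _ abs_ge_self]\<close>)
  show "(\<integral>\<omega>. g \<omega> \<partial>P) \<le> (\<integral>\<omega>. f \<omega> \<partial>P)"
    by (rule integral_mono[OF gi assms(1)]) (use assms(3) in force)
  show "(\<integral>\<omega>. \<bar>g \<omega>\<bar> \<partial>P) \<le> (\<integral>\<omega>. f \<omega> \<partial>P)"
    by (rule integral_mono[OF _ assms(1)]) (use assms(3) gi in auto)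
qed

lemma L2_add:
  fixes F G :: "'w \<Rightarrow> 'a::euclidean_space"
  assumes "F \<in> borel_measurable P" "G \<in> borel_measurable P"
    "integrable P (\<lambda>\<omega>. (norm (F \<omega>))\<^sup>2)" "integrable P (\<lambda>\<omega>. (norm (G \<omega>))\<^sup>2)"
  shows "(\<lambda>\<omega>. F \<omega> + G \<omega>) \<in> borel_measurable P"
    "integrable P (\<lambda>\<omega>. (norm (F \<omega> + G \<omega>))\<^sup>2)"
    "(\<integral>\<omega>. (norm (F \<omega> + G \<omega>))\<^sup>2 \<partial>P) \<le> 2 * (\<integral>\<omega>. (norm (F \<omega>))\<^sup>2 \<partial>P) + 2 * (\<integral>\<omega>. (norm (G \<omega>))\<^sup>2 \<partial>P)"
proof -
  show m: "(\<lambda>\<omega>. F \<omega> + G \<omega>) \<in> borel_measurable P" using assms by measurable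
  have i: "integrable P (\<lambda>\<omega>. 2 * (norm (F \<omega>))\<^sup>2 + 2 * (norm (G \<omega>))\<^sup>2)" using assms by auto
  have m2: "(\<lambda>\<omega>. (norm (F \<omega> + G \<omega>))\<^sup>2) \<in> borel_measurable P" using m by measurable
  have b: "\<And>\<omega>. \<bar>(norm (F \<omega> + G \<omega>))\<^sup>2\<bar> \<le> 2 * (norm (F \<omega>))\<^sup>2 + 2 * (norm (G \<omega>))\<^sup>2"
    using sq_add_le by simp
  show "integrable P (\<lambda>\<omega>. (norm (F \<omega> + G \<omega>))\<^sup>2)" using bound_int(1)[OF i m2 b] .
  have "(\<integral>\<omega>. (norm (F \<omega> + G \<omega>))\<^sup>2 \<partial>P) \<le> (\<integral>\<omega>. 2 * (norm (F \<omega>))\<^sup>2 + 2 * (norm (G \<omega>))\<^sup>2 \<partial>P)"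
    using bound_int(2)[OF i m2 b] .
  also have "\<dots> = 2 * (\<integral>\<omega>. (norm (F \<omega>))\<^sup>2 \<partial>P) + 2 * (\<integral>\<omega>. (norm (G \<omega>))\<^sup>2 \<partial>P)"
    using assms by simp
  finally show "(\<integral>\<omega>. (norm (F \<omega> + G \<omega>))\<^sup>2 \<partial>P) \<le> 2 * (\<integral>\<omega>. (norm (F \<omega>))\<^sup>2 \<partial>P) + 2 * (\<integral>\<omega>. (norm (G \<omega>))\<^sup>2 \<partial>P)" .
qed

lemma L2_mat:
  fixes F :: "'w \<Rightarrow> real^'n" and C :: "real^'n^'m"
  assumes "F \<in> borel_measurable P" "integrable P (\<lambda>\<omega>. (norm (F \<omega>))\<^sup>2)"
  shows "(\<lambda>\<omega>. C *v F \<omega>) \<in> borel_measurable P"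
    "integrable P (\<lambda>\<omega>. (norm (C *v F \<omega>))\<^sup>2)"
    "(\<integral>\<omega>. (norm (C *v F \<omega>))\<^sup>2 \<partial>P) \<le> (norm C)\<^sup>2 * (\<integral>\<omega>. (norm (F \<omega>))\<^sup>2 \<partial>P)"
proof -
  show m: "(\<lambda>\<omega>. C *v F \<omega>) \<in> borel_measurable P"
    using assms(1) by (intro borel_measurable_continuous_on[OF matrix_vector_mult_linear_continuous_on]) 
  have i: "integrable P (\<lambda>\<omega>. (norm C)\<^sup>2 * (norm (F \<omega>))\<^sup>2)" using assms by auto
  have m2: "(\<lambda>\<omega>. (norm (C *v F \<omega>))\<^sup>2) \<in> borel_measurable P" using m by measurable
  have b: "\<And>\<omega>. \<bar>(norm (C *v F \<omega>))\<^sup>2\<bar> \<le> (norm C)\<^sup>2 * (norm (F \<omega>))\<^sup>2"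
    using sq_mv_le by simp
  show "integrable P (\<lambda>\<omega>. (norm (C *v F \<omega>))\<^sup>2)" using bound_int(1)[OF i m2 b] .
  show "(\<integral>\<omega>. (norm (C *v F \<omega>))\<^sup>2 \<partial>P) \<le> (norm C)\<^sup>2 * (\<integral>\<omega>. (norm (F \<omega>))\<^sup>2 \<partial>P)"
    using bound_int(2)[OF i m2 b] by simp
qed

lemma young_eps: fixes x y e :: real assumes "0 < e" shows "x * y \<le> (x\<^sup>2 / e + e * y\<^sup>2) / 2"
proof -
  have "0 \<le> (x - e * y)\<^sup>2" by simp
  hence "2 * e * (x * y) \<le> x\<^sup>2 + e\<^sup>2 * y\<^sup>2" by (simp add: power2_eq_square algebra_simps)
  hence "x * y \<le> (x\<^sup>2 + e\<^sup>2 * y\<^sup>2) / (2 * e)" using assms by (simp add: field_simps)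
  also have "\<dots> = (x\<^sup>2 / e + e * y\<^sup>2) / 2" using assms by (simp add: field_simps power2_eq_square)
  finally show ?thesis .
qed

locale fam =
  fixes M :: "nat \<Rightarrow> 'w measure"
  assumes prob: "\<And>n. 2 \<le> n \<Longrightarrow> prob_space (M n)"
begin

definition Bnd :: "(nat \<Rightarrow> nat \<Rightarrow> 'w \<Rightarrow> 'a::euclidean_space) \<Rightarrow> bool" where
  "Bnd F \<longleftrightarrow> (\<exists>K N. 2 \<le> N \<and> (\<forall>n\<ge>N. \<forall>i\<in>{1..n}. F n i \<in> borel_measurable (M n)
      \<and> integrable (M n) (\<lambda>\<omega>. (norm (F n i \<omega>))\<^sup>2) \<and> (\<integral>\<omega>. (norm (F n i \<omega>))\<^sup>2 \<partial>M n) \<le> K))"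

definition Van :: "(nat \<Rightarrow> nat \<Rightarrow> 'w \<Rightarrow> 'a::euclidean_space) \<Rightarrow> bool" where
  "Van F \<longleftrightarrow> (\<exists>V N. 2 \<le> N \<and> V \<longlonglongrightarrow> 0 \<and> (\<forall>n\<ge>N. \<forall>i\<in>{1..n}. F n i \<in> borel_measurable (M n)
      \<and> integrable (M n) (\<lambda>\<omega>. (norm (F n i \<omega>))\<^sup>2) \<and> (\<integral>\<omega>. (norm (F n i \<omega>))\<^sup>2 \<partial>M n) \<le> V n))"

definition SV :: "(nat \<Rightarrow> nat \<Rightarrow> 'w \<Rightarrow> real) \<Rightarrow> bool" where
  "SV f \<longleftrightarrow> (\<exists>W N. 2 \<le> N \<and> W \<longlonglongrightarrow> 0 \<and> (\<forall>n\<ge>N. \<forall>i\<in>{1..n}.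
      integrable (M n) (f n i) \<and> (\<integral>\<omega>. \<bar>f n i \<omega>\<bar> \<partial>M n) \<le> W n))"

lemma Bnd_cong:
  assumes "Bnd F" "\<exists>N. \<forall>n\<ge>N. \<forall>i\<in>{1..n}. \<forall>\<omega>\<in>space (M n). G n i \<omega> = F n i \<omega>"
  shows "Bnd G"
proof -
  obtain K N where KN: "2 \<le> N" "\<forall>n\<ge>N. \<forall>i\<in>{1..n}. F n i \<in> borel_measurable (M n)
      \<and> integrable (M n) (\<lambda>\<omega>. (norm (F n i \<omega>))\<^sup>2) \<and> (\<integral>\<omega>. (norm (F n i \<omega>))\<^sup>2 \<partial>M n) \<le> K"
    using assms(1) unfolding Bnd_def by blast
  obtain N' where N': "\<forall>n\<ge>N'. \<forall>i\<in>{1..n}. \<forall>\<omega>\<in>space (M n). G n i \<omega> = F n i \<omega>" using assms(2) by blast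
  show ?thesis unfolding Bnd_def
  proof (intro exI[of _ K] exI[of _ "max N N'"] conjI allI impI ballI)
    fix n i assume n: "max N N' \<le> n" and i: "i \<in> {1..n}"
    have eq: "\<And>\<omega>. \<omega> \<in> space (M n) \<Longrightarrow> G n i \<omega> = F n i \<omega>" using N' n i by auto
    have f: "F n i \<in> borel_measurable (M n) \<and> integrable (M n) (\<lambda>\<omega>. (norm (F n i \<omega>))\<^sup>2) \<and> (\<integral>\<omega>. (norm (F n i \<omega>))\<^sup>2 \<partial>M n) \<le> K"
      using KN n i by auto
    show "G n i \<in> borel_measurable (M n)" using f measurable_cong[of "M n" "G n i" "F n i"] eq by auto
    show "integrable (M n) (\<lambda>\<omega>. (norm (G n i \<omega>))\<^sup>2)" using f Bochner_Integration.integrable_cong[of "M n" "M n" "\<lambda>\<omega>. (norm (G n i \<omega>))\<^sup>2" "\<lambda>\<omega>. (norm (F n i \<omega>))\<^sup>2"] eq by auto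
    show "(\<integral>\<omega>. (norm (G n i \<omega>))\<^sup>2 \<partial>M n) \<le> K" using f Bochner_Integration.integral_cong[of "M n" "M n" "\<lambda>\<omega>. (norm (G n i \<omega>))\<^sup>2" "\<lambda>\<omega>. (norm (F n i \<omega>))\<^sup>2"] eq by auto
  qed (use KN in auto)
qed

lemma Van_cong:
  assumes "Van F" "\<exists>N. \<forall>n\<ge>N. \<forall>i\<in>{1..n}. \<forall>\<omega>\<in>space (M n). G n i \<omega> = F n i \<omega>"
  shows "Van G"
proof -
  obtain V N where KN: "2 \<le> N" "V \<longlonglongrightarrow> 0" "\<forall>n\<ge>N. \<forall>i\<in>{1..n}. F n i \<in> borel_measurable (M n)
      \<and> integrable (M n) (\<lambda>\<omega>. (norm (F n i \<omega>))\<^sup>2) \<and> (\<integral>\<omega>. (norm (F n i \<omega>))\<^sup>2 \<partial>M n) \<le> V n"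
    using assms(1) unfolding Van_def by blast
  obtain N' where N': "\<forall>n\<ge>N'. \<forall>i\<in>{1..n}. \<forall>\<omega>\<in>space (M n). G n i \<omega> = F n i \<omega>" using assms(2) by blast
  show ?thesis unfolding Van_def
  proof (intro exI[of _ V] exI[of _ "max N N'"] conjI allI impI ballI)
    fix n i assume n: "max N N' \<le> n" and i: "i \<in> {1..n}"
    have eq: "\<And>\<omega>. \<omega> \<in> space (M n) \<Longrightarrow> G n i \<omega> = F n i \<omega>" using N' n i by auto
    have f: "F n i \<in> borel_measurable (M n) \<and> integrable (M n) (\<lambda>\<omega>. (norm (F n i \<omega>))\<^sup>2) \<and> (\<integral>\<omega>. (norm (F n i \<omega>))\<^sup>2 \<partial>M n) \<le> V n"
      using KN n i by auto
    show "G n i \<in> borel_measurable (M n)" using f measurable_cong[of "M n" "G n i" "F n i"] eq by auto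
    show "integrable (M n) (\<lambda>\<omega>. (norm (G n i \<omega>))\<^sup>2)" using f Bochner_Integration.integrable_cong[of "M n" "M n" "\<lambda>\<omega>. (norm (G n i \<omega>))\<^sup>2" "\<lambda>\<omega>. (norm (F n i \<omega>))\<^sup>2"] eq by auto
    show "(\<integral>\<omega>. (norm (G n i \<omega>))\<^sup>2 \<partial>M n) \<le> V n" using f Bochner_Integration.integral_cong[of "M n" "M n" "\<lambda>\<omega>. (norm (G n i \<omega>))\<^sup>2" "\<lambda>\<omega>. (norm (F n i \<omega>))\<^sup>2"] eq by auto
  qed (use KN in auto)
qed

lemma SV_cong:
  assumes "SV f" "\<exists>N. \<forall>n\<ge>N. \<forall>i\<in>{1..n}. \<forall>\<omega>\<in>space (M n). g n i \<omega> = f n i \<omega>"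
  shows "SV g"
proof -
  obtain W N where KN: "2 \<le> N" "W \<longlonglongrightarrow> 0" "\<forall>n\<ge>N. \<forall>i\<in>{1..n}.
      integrable (M n) (f n i) \<and> (\<integral>\<omega>. \<bar>f n i \<omega>\<bar> \<partial>M n) \<le> W n"
    using assms(1) unfolding SV_def by blast
  obtain N' where N': "\<forall>n\<ge>N'. \<forall>i\<in>{1..n}. \<forall>\<omega>\<in>space (M n). g n i \<omega> = f n i \<omega>" using assms(2) by blast
  show ?thesis unfolding SV_def
  proof (intro exI[of _ W] exI[of _ "max N N'"] conjI allI impI ballI)
    fix n i assume n: "max N N' \<le> n" and i: "i \<in> {1..n}"
    have eq: "\<And>\<omega>. \<omega> \<in> space (M n) \<Longrightarrow> g n i \<omega> = f n i \<omega>" using N' n i by auto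
    have f: "integrable (M n) (f n i) \<and> (\<integral>\<omega>. \<bar>f n i \<omega>\<bar> \<partial>M n) \<le> W n"
      using KN n i by auto
    show "integrable (M n) (g n i)" using f Bochner_Integration.integrable_cong[of "M n" "M n" "g n i" "f n i"] eq by auto
    show "(\<integral>\<omega>. \<bar>g n i \<omega>\<bar> \<partial>M n) \<le> W n" using f Bochner_Integration.integral_cong[of "M n" "M n" "\<lambda>\<omega>. \<bar>g n i \<omega>\<bar>" "\<lambda>\<omega>. \<bar>f n i \<omega>\<bar>"] eq by auto
  qed (use KN in auto)
qed

lemma Bnd_add:
  assumes "Bnd F" "Bnd G" shows "Bnd (\<lambda>n i \<omega>. F n i \<omega> + G n i \<omega>)"
proof -
  obtain K1 N1 where 1: "2 \<le> N1" "\<forall>n\<ge>N1. \<forall>i\<in>{1..n}. F n i \<in> borel_measurable (M n)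
      \<and> integrable (M n) (\<lambda>\<omega>. (norm (F n i \<omega>))\<^sup>2) \<and> (\<integral>\<omega>. (norm (F n i \<omega>))\<^sup>2 \<partial>M n) \<le> K1"
    using assms(1) unfolding Bnd_def by blast
  obtain K2 N2 where 2: "2 \<le> N2" "\<forall>n\<ge>N2. \<forall>i\<in>{1..n}. G n i \<in> borel_measurable (M n)
      \<and> integrable (M n) (\<lambda>\<omega>. (norm (G n i \<omega>))\<^sup>2) \<and> (\<integral>\<omega>. (norm (G n i \<omega>))\<^sup>2 \<partial>M n) \<le> K2"
    using assms(2) unfolding Bnd_def by blast
  show ?thesis unfolding Bnd_def
  proof (intro exI[of _ "2*K1+2*K2"] exI[of _ "max N1 N2"] conjI allI impI ballI)
    fix n i assume n: "max N1 N2 \<le> n" and i: "i \<in> {1..n}"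
    note a = 1(2)[rule_format, of n i] 2(2)[rule_format, of n i]
    note L = L2_add[of "F n i" "M n" "G n i"]
    show "(\<lambda>\<omega>. F n i \<omega> + G n i \<omega>) \<in> borel_measurable (M n)" using L a n i by auto
    show "integrable (M n) (\<lambda>\<omega>. (norm (F n i \<omega> + G n i \<omega>))\<^sup>2)" using L a n i by auto
    show "(\<integral>\<omega>. (norm (F n i \<omega> + G n i \<omega>))\<^sup>2 \<partial>M n) \<le> 2*K1+2*K2" using L a n i by fastforce
  qed (use 1 in auto)
qed

lemma Van_add:
  assumes "Van F" "Van G" shows "Van (\<lambda>n i \<omega>. F n i \<omega> + G n i \<omega>)"
proof -
  obtain K1 N1 where 1: "2 \<le> N1" "K1 \<longlonglongrightarrow> 0" "\<forall>n\<ge>N1. \<forall>i\<in>{1..n}. F n i \<in> borel_measurable (M n)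
      \<and> integrable (M n) (\<lambda>\<omega>. (norm (F n i \<omega>))\<^sup>2) \<and> (\<integral>\<omega>. (norm (F n i \<omega>))\<^sup>2 \<partial>M n) \<le> K1 n"
    using assms(1) unfolding Van_def by blast
  obtain K2 N2 where 2: "2 \<le> N2" "K2 \<longlonglongrightarrow> 0" "\<forall>n\<ge>N2. \<forall>i\<in>{1..n}. G n i \<in> borel_measurable (M n)
      \<and> integrable (M n) (\<lambda>\<omega>. (norm (G n i \<omega>))\<^sup>2) \<and> (\<integral>\<omega>. (norm (G n i \<omega>))\<^sup>2 \<partial>M n) \<le> K2 n"
    using assms(2) unfolding Van_def by blast
  show ?thesis unfolding Van_def
  proof (intro exI[of _ "\<lambda>n. 2*K1 n+2*K2 n"] exI[of _ "max N1 N2"] conjI allI impI ballI)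
    fix n i assume n: "max N1 N2 \<le> n" and i: "i \<in> {1..n}"
    note a = 1(3)[rule_format, of n i] 2(3)[rule_format, of n i]
    note L = L2_add[of "F n i" "M n" "G n i"]
    show "(\<lambda>\<omega>. F n i \<omega> + G n i \<omega>) \<in> borel_measurable (M n)" using L a n i by auto
    show "integrable (M n) (\<lambda>\<omega>. (norm (F n i \<omega> + G n i \<omega>))\<^sup>2)" using L a n i by auto
    show "(\<integral>\<omega>. (norm (F n i \<omega> + G n i \<omega>))\<^sup>2 \<partial>M n) \<le> 2*K1 n+2*K2 n" using L a n i by fastforce
  next
    show "(\<lambda>n. 2 * K1 n + 2 * K2 n) \<longlonglongrightarrow> 0" using tendsto_add[OF tendsto_mult_right_zero[OF 1(2)] tendsto_mult_right_zero[OF 2(2)]] by simp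
  qed (use 1 in auto)
qed

lemma Bnd_neg: assumes "Bnd F" shows "Bnd (\<lambda>n i \<omega>. - F n i \<omega>)"
  using assms unfolding Bnd_def by auto

lemma Van_neg: assumes "Van F" shows "Van (\<lambda>n i \<omega>. - F n i \<omega>)"
  using assms unfolding Van_def by auto

lemma Bnd_diff: assumes "Bnd F" "Bnd G" shows "Bnd (\<lambda>n i \<omega>. F n i \<omega> - G n i \<omega>)"
  using Bnd_add[OF assms(1) Bnd_neg[OF assms(2)]] by simp

lemma Van_diff: assumes "Van F" "Van G" shows "Van (\<lambda>n i \<omega>. F n i \<omega> - G n i \<omega>)"
  using Van_add[OF assms(1) Van_neg[OF assms(2)]] by simp

lemma Van_Bnd: assumes "Van F" shows "Bnd F"
proof -
  obtain V N where 1: "2 \<le> N" "V \<longlonglongrightarrow> 0" "\<forall>n\<ge>N. \<forall>i\<in>{1..n}. F n i \<in> borel_measurable (M n)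
      \<and> integrable (M n) (\<lambda>\<omega>. (norm (F n i \<omega>))\<^sup>2) \<and> (\<integral>\<omega>. (norm (F n i \<omega>))\<^sup>2 \<partial>M n) \<le> V n"
    using assms(1) unfolding Van_def by blast
  have "eventually (\<lambda>n. V n < 1) sequentially" using order_tendstoD(2)[OF 1(2)] by simp
  then obtain N' where N': "\<forall>n\<ge>N'. V n < 1" unfolding eventually_sequentially by blast
  show ?thesis unfolding Bnd_def
  proof (intro exI[of _ "1::real"] exI[of _ "max N N'"] conjI allI impI ballI)
    fix n i assume n: "max N N' \<le> n" and i: "i \<in> {1..n}"
    note a = 1(3)[rule_format, of n i]
    have v: "V n < 1" using N' n by simp
    show "(\<integral>\<omega>. (norm (F n i \<omega>))\<^sup>2 \<partial>M n) \<le> 1" using a n i v by fastforce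
    show "F n i \<in> borel_measurable (M n)" "integrable (M n) (\<lambda>\<omega>. (norm (F n i \<omega>))\<^sup>2)" using a n i by auto
  qed (use 1 in auto)
qed

lemma Bnd_mat:
  fixes C :: "nat \<Rightarrow> real^'n^'m" and F :: "nat \<Rightarrow> nat \<Rightarrow> 'w \<Rightarrow> real^'n"
  assumes "\<exists>K N. \<forall>n\<ge>N. norm (C n) \<le> K" "Bnd F" shows "Bnd (\<lambda>n i \<omega>. C n *v F n i \<omega>)"
proof -
  obtain K0 N0 where 0: "\<forall>n\<ge>N0. norm (C n) \<le> K0" using assms(1) by blast
  obtain K1 N1 where 1: "2 \<le> N1" "\<forall>n\<ge>N1. \<forall>i\<in>{1..n}. F n i \<in> borel_measurable (M n)
      \<and> integrable (M n) (\<lambda>\<omega>. (norm (F n i \<omega>))\<^sup>2) \<and> (\<integral>\<omega>. (norm (F n i \<omega>))\<^sup>2 \<partial>M n) \<le> K1"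
    using assms(2) unfolding Bnd_def by blast
  show ?thesis unfolding Bnd_def
  proof (intro exI[of _ "K0\<^sup>2 * K1"] exI[of _ "max N0 N1"] conjI allI impI ballI)
    fix n i assume n: "max N0 N1 \<le> n" and i: "i \<in> {1..n}"
    note a = 1(2)[rule_format, of n i]
    note L = L2_mat[of "F n i" "M n" "C n"]
    show "(\<lambda>\<omega>. C n *v F n i \<omega>) \<in> borel_measurable (M n)" using L a n i by auto
    show "integrable (M n) (\<lambda>\<omega>. (norm (C n *v F n i \<omega>))\<^sup>2)" using L a n i by auto
    have c: "(norm (C n))\<^sup>2 \<le> K0\<^sup>2" using 0 n by (simp add: power_mono)
    have p: "0 \<le> (\<integral>\<omega>. (norm (F n i \<omega>))\<^sup>2 \<partial>M n)" by simp
    have "(norm (C n))\<^sup>2 * (\<integral>\<omega>. (norm (F n i \<omega>))\<^sup>2 \<partial>M n) \<le> K0\<^sup>2 * K1"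
      using mult_mono[OF c, of "(\<integral>\<omega>. (norm (F n i \<omega>))\<^sup>2 \<partial>M n)" K1] p a n i by auto
    then show "(\<integral>\<omega>. (norm (C n *v F n i \<omega>))\<^sup>2 \<partial>M n) \<le> K0\<^sup>2 * K1" using L a n i by fastforce
  qed (use 1 in auto)
qed

lemma Van_mat:
  fixes C :: "nat \<Rightarrow> real^'n^'m" and F :: "nat \<Rightarrow> nat \<Rightarrow> 'w \<Rightarrow> real^'n"
  assumes "\<exists>K N. \<forall>n\<ge>N. norm (C n) \<le> K" "Van F" shows "Van (\<lambda>n i \<omega>. C n *v F n i \<omega>)"
proof -
  obtain K0 N0 where 0: "\<forall>n\<ge>N0. norm (C n) \<le> K0" using assms(1) by blast
  obtain K1 N1 where 1: "2 \<le> N1" "K1 \<longlonglongrightarrow> 0" "\<forall>n\<ge>N1. \<forall>i\<in>{1..n}. F n i \<in> borel_measurable (M n)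
      \<and> integrable (M n) (\<lambda>\<omega>. (norm (F n i \<omega>))\<^sup>2) \<and> (\<integral>\<omega>. (norm (F n i \<omega>))\<^sup>2 \<partial>M n) \<le> K1 n"
    using assms(2) unfolding Van_def by blast
  show ?thesis unfolding Van_def
  proof (intro exI[of _ "\<lambda>n. K0\<^sup>2 * K1 n"] exI[of _ "max N0 N1"] conjI allI impI ballI)
    fix n i assume n: "max N0 N1 \<le> n" and i: "i \<in> {1..n}"
    note a = 1(3)[rule_format, of n i]
    note L = L2_mat[of "F n i" "M n" "C n"]
    show "(\<lambda>\<omega>. C n *v F n i \<omega>) \<in> borel_measurable (M n)" using L a n i by auto
    show "integrable (M n) (\<lambda>\<omega>. (norm (C n *v F n i \<omega>))\<^sup>2)" using L a n i by auto
    have c: "(norm (C n))\<^sup>2 \<le> K0\<^sup>2" using 0 n by (simp add: power_mono)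
    have p: "0 \<le> (\<integral>\<omega>. (norm (F n i \<omega>))\<^sup>2 \<partial>M n)" by simp
    have "(norm (C n))\<^sup>2 * (\<integral>\<omega>. (norm (F n i \<omega>))\<^sup>2 \<partial>M n) \<le> K0\<^sup>2 * K1 n"
      using mult_mono[OF c, of "(\<integral>\<omega>. (norm (F n i \<omega>))\<^sup>2 \<partial>M n)" "K1 n"] p a n i by auto
    then show "(\<integral>\<omega>. (norm (C n *v F n i \<omega>))\<^sup>2 \<partial>M n) \<le> K0\<^sup>2 * K1 n" using L a n i by fastforce
  next
    show "(\<lambda>n. K0\<^sup>2 * K1 n) \<longlonglongrightarrow> 0" using tendsto_mult_right_zero[OF 1(2)] by simp
  qed (use 1 in auto)
qed

lemma Van_mat0:
  fixes C :: "nat \<Rightarrow> real^'n^'m" and F :: "nat \<Rightarrow> nat \<Rightarrow> 'w \<Rightarrow> real^'n"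
  assumes "C \<longlonglongrightarrow> 0" "Bnd F" shows "Van (\<lambda>n i \<omega>. C n *v F n i \<omega>)"
proof -
  obtain K1 N1 where 1: "2 \<le> N1" "\<forall>n\<ge>N1. \<forall>i\<in>{1..n}. F n i \<in> borel_measurable (M n)
      \<and> integrable (M n) (\<lambda>\<omega>. (norm (F n i \<omega>))\<^sup>2) \<and> (\<integral>\<omega>. (norm (F n i \<omega>))\<^sup>2 \<partial>M n) \<le> K1"
    using assms(2) unfolding Bnd_def by blast
  have t0: "(\<lambda>n. (norm (C n))\<^sup>2) \<longlonglongrightarrow> 0"
    using tendsto_power[OF tendsto_norm_zero[OF assms(1)], of 2] by simp
  have t: "(\<lambda>n. (norm (C n))\<^sup>2 * max K1 0) \<longlonglongrightarrow> 0"
    using tendsto_mult_left_zero[OF t0] by simp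
  show ?thesis unfolding Van_def
  proof (intro exI[of _ "\<lambda>n. (norm (C n))\<^sup>2 * max K1 0"] exI[of _ "N1"] conjI allI impI ballI t)
    fix n i assume n: "N1 \<le> n" and i: "i \<in> {1..n}"
    note a = 1(2)[rule_format, of n i]
    note L = L2_mat[of "F n i" "M n" "C n"]
    show "(\<lambda>\<omega>. C n *v F n i \<omega>) \<in> borel_measurable (M n)" using L a n i by auto
    show "integrable (M n) (\<lambda>\<omega>. (norm (C n *v F n i \<omega>))\<^sup>2)" using L a n i by auto
    have "(norm (C n))\<^sup>2 * (\<integral>\<omega>. (norm (F n i \<omega>))\<^sup>2 \<partial>M n) \<le> (norm (C n))\<^sup>2 * max K1 0"
      using a n i by (intro mult_left_mono) auto
    then show "(\<integral>\<omega>. (norm (C n *v F n i \<omega>))\<^sup>2 \<partial>M n) \<le> (norm (C n))\<^sup>2 * max K1 0" using L a n i by fastforce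
  qed (use 1 in auto)
qed

lemma Van_const:
  assumes "c \<longlonglongrightarrow> 0" shows "Van (\<lambda>n i \<omega>. c n)"
  unfolding Van_def
proof (intro exI[of _ "\<lambda>n. (norm (c n))\<^sup>2"] exI[of _ 2] conjI allI impI ballI)
  show "(\<lambda>n. (norm (c n))\<^sup>2) \<longlonglongrightarrow> 0" using tendsto_power[OF tendsto_norm_zero[OF assms], of 2] by simp
  fix n i :: nat assume n: "2 \<le> n"
  interpret prob_space "M n" using prob n .
  show "integrable (M n) (\<lambda>\<omega>. (norm (c n))\<^sup>2)" by simp
  show "(\<integral>\<omega>. (norm (c n))\<^sup>2 \<partial>M n) \<le> (norm (c n))\<^sup>2" by (simp add: prob_space)
qed auto

lemma Bnd_const:
  assumes "\<exists>K N. \<forall>n\<ge>N. norm (c n) \<le> K" shows "Bnd (\<lambda>n i \<omega>. c n)"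
proof -
  obtain K N where KN: "\<forall>n\<ge>N. norm (c n) \<le> K" using assms by blast
  show ?thesis unfolding Bnd_def
  proof (intro exI[of _ "K\<^sup>2"] exI[of _ "max 2 N"] conjI allI impI ballI)
    fix n i assume n: "max 2 N \<le> n"
    interpret prob_space "M n" using prob n by simp
    show "integrable (M n) (\<lambda>\<omega>. (norm (c n))\<^sup>2)" by simp
    show "(\<integral>\<omega>. (norm (c n))\<^sup>2 \<partial>M n) \<le> K\<^sup>2" using KN n by (simp add: prob_space power_mono)
  qed auto
qed

lemma Van_zero: "Van (\<lambda>n i \<omega>. 0)"
  using Van_const[of "\<lambda>n. 0"] by simp

end

context fam begin
lemma SV_zero: "SV (\<lambda>n i \<omega>. 0)"
  unfolding SV_def by (intro exI[of _ "\<lambda>n. 0"] exI[of _ 2]) auto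

lemma SV_dom:
  assumes "SV f" "SV g" "0 \<le> c"
    "\<exists>N. \<forall>n\<ge>N. \<forall>i\<in>{1..n}. h n i \<in> borel_measurable (M n) \<and>
        (\<forall>\<omega>\<in>space (M n). \<bar>h n i \<omega>\<bar> \<le> c * (\<bar>f n i \<omega>\<bar> + \<bar>g n i \<omega>\<bar>))"
  shows "SV h"
proof -
  obtain W1 N1 where 1: "2 \<le> N1" "W1 \<longlonglongrightarrow> 0" "\<forall>n\<ge>N1. \<forall>i\<in>{1..n}.
      integrable (M n) (f n i) \<and> (\<integral>\<omega>. \<bar>f n i \<omega>\<bar> \<partial>M n) \<le> W1 n"
    using assms(1) unfolding SV_def by blast
  obtain W2 N2 where 2: "2 \<le> N2" "W2 \<longlonglongrightarrow> 0" "\<forall>n\<ge>N2. \<forall>i\<in>{1..n}.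
      integrable (M n) (g n i) \<and> (\<integral>\<omega>. \<bar>g n i \<omega>\<bar> \<partial>M n) \<le> W2 n"
    using assms(2) unfolding SV_def by blast
  obtain N3 where 3: "\<forall>n\<ge>N3. \<forall>i\<in>{1..n}. h n i \<in> borel_measurable (M n) \<and>
        (\<forall>\<omega>\<in>space (M n). \<bar>h n i \<omega>\<bar> \<le> c * (\<bar>f n i \<omega>\<bar> + \<bar>g n i \<omega>\<bar>))" using assms(4) by blast
  show ?thesis unfolding SV_def
  proof (intro exI[of _ "\<lambda>n. c * (W1 n + W2 n)"] exI[of _ "max N1 (max N2 N3)"] conjI allI impI ballI)
    have "(\<lambda>n. W1 n + W2 n) \<longlonglongrightarrow> 0" using tendsto_add[OF 1(2) 2(2)] by simp
    then show "(\<lambda>n. c * (W1 n + W2 n)) \<longlonglongrightarrow> 0" using tendsto_mult_right_zero by blast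
    fix n i assume n: "max N1 (max N2 N3) \<le> n" and i: "i \<in> {1..n}"
    have n1: "N1 \<le> n" and n2: "N2 \<le> n" and n3: "N3 \<le> n" using n by auto
    have fi: "integrable (M n) (f n i)" and fb: "(\<integral>\<omega>. \<bar>f n i \<omega>\<bar> \<partial>M n) \<le> W1 n"
      using 1(3) n1 i by blast+
    have gi: "integrable (M n) (g n i)" and gb: "(\<integral>\<omega>. \<bar>g n i \<omega>\<bar> \<partial>M n) \<le> W2 n"
      using 2(3) n2 i by blast+
    have hm: "h n i \<in> borel_measurable (M n)" and hb: "\<And>\<omega>. \<omega> \<in> space (M n) \<Longrightarrow> \<bar>h n i \<omega>\<bar> \<le> c * (\<bar>f n i \<omega>\<bar> + \<bar>g n i \<omega>\<bar>)"
      using 3 n3 i by blast+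
    have fa: "integrable (M n) (\<lambda>\<omega>. \<bar>f n i \<omega>\<bar>)" using fi by (rule integrable_abs)
    have ga: "integrable (M n) (\<lambda>\<omega>. \<bar>g n i \<omega>\<bar>)" using gi by (rule integrable_abs)
    have ii: "integrable (M n) (\<lambda>\<omega>. c * (\<bar>f n i \<omega>\<bar> + \<bar>g n i \<omega>\<bar>))"
      by (rule integrable_mult_right) (rule Bochner_Integration.integrable_add[OF fa ga])
    note B = bound_int[OF ii hm hb]
    show "integrable (M n) (h n i)" by (rule B(1))
    have "(\<integral>\<omega>. \<bar>h n i \<omega>\<bar> \<partial>M n) \<le> (\<integral>\<omega>. c * (\<bar>f n i \<omega>\<bar> + \<bar>g n i \<omega>\<bar>) \<partial>M n)" by (rule B(3))
    also have "\<dots> = c * ((\<integral>\<omega>. \<bar>f n i \<omega>\<bar> \<partial>M n) + (\<integral>\<omega>. \<bar>g n i \<omega>\<bar> \<partial>M n))"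
      using fa ga by (simp add: integral_add)
    also have "\<dots> \<le> c * (W1 n + W2 n)" using fb gb assms(3) by (intro mult_left_mono) auto
    finally show "(\<integral>\<omega>. \<bar>h n i \<omega>\<bar> \<partial>M n) \<le> c * (W1 n + W2 n)" .
  qed (use 1 in auto)
qed

lemma SV_meas: "SV f \<Longrightarrow> \<exists>N. \<forall>n\<ge>N. \<forall>i\<in>{1..n}. f n i \<in> borel_measurable (M n)"
  unfolding SV_def by (blast intro: borel_measurable_integrable)

lemma SV_add: assumes "SV f" "SV g" shows "SV (\<lambda>n i \<omega>. f n i \<omega> + g n i \<omega>)"
proof -
  obtain N1 where 1: "\<forall>n\<ge>N1. \<forall>i\<in>{1..n}. f n i \<in> borel_measurable (M n)" using SV_meas[OF assms(1)] by blast
  obtain N2 where 2: "\<forall>n\<ge>N2. \<forall>i\<in>{1..n}. g n i \<in> borel_measurable (M n)" using SV_meas[OF assms(2)] by blast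
  show ?thesis
    by (rule SV_dom[OF assms, of 1], simp, rule exI[of _ "max N1 N2"]) (use 1 2 in \<open>auto intro!: borel_measurable_add\<close>)
qed

lemma SV_cmult: assumes "SV f" shows "SV (\<lambda>n i \<omega>. c * f n i \<omega>)"
proof -
  obtain N1 where 1: "\<forall>n\<ge>N1. \<forall>i\<in>{1..n}. f n i \<in> borel_measurable (M n)" using SV_meas[OF assms(1)] by blast
  show ?thesis
    by (rule SV_dom[OF assms SV_zero, of "\<bar>c\<bar>"], simp, rule exI[of _ "N1"]) (use 1 in \<open>auto simp: abs_mult intro!: borel_measurable_times\<close>)
qed

lemma SV_diff: assumes "SV f" "SV g" shows "SV (\<lambda>n i \<omega>. f n i \<omega> - g n i \<omega>)"
  using SV_add[OF assms(1) SV_cmult[OF assms(2), of "-1"]] by simp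

lemma SV_sum:
  assumes "finite S" "\<forall>t\<in>S. SV (f t)" shows "SV (\<lambda>n i \<omega>. \<Sum>t\<in>S. f t n i \<omega>)"
  using assms
proof (induction S rule: finite_induct)
  case empty then show ?case using SV_zero by simp
next
  case (insert x F)
  have "SV (\<lambda>n i \<omega>. f x n i \<omega> + (\<Sum>t\<in>F. f t n i \<omega>))" using insert by (intro SV_add) auto
  then show ?case using insert by simp
qed

lemma SV_wsum:
  assumes "SV f" "\<exists>G N. \<forall>n\<ge>N. (\<Sum>j\<in>{1..n}. \<bar>a n j\<bar>) \<le> G"
  shows "SV (\<lambda>n i \<omega>. \<Sum>j\<in>{1..n}. a n j * f n j \<omega>)"
proof -
  obtain W N where 1: "2 \<le> N" "W \<longlonglongrightarrow> 0" "\<forall>n\<ge>N. \<forall>i\<in>{1..n}.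
      integrable (M n) (f n i) \<and> (\<integral>\<omega>. \<bar>f n i \<omega>\<bar> \<partial>M n) \<le> W n"
    using assms(1) unfolding SV_def by blast
  obtain G N' where G: "\<forall>n\<ge>N'. (\<Sum>j\<in>{1..n}. \<bar>a n j\<bar>) \<le> G" using assms(2) by blast
  show ?thesis unfolding SV_def
  proof (intro exI[of _ "\<lambda>n. G * W n"] exI[of _ "max N N'"] conjI allI impI ballI)
    show "(\<lambda>n. G * W n) \<longlonglongrightarrow> 0" using tendsto_mult_right_zero[OF 1(2)] by simp
    fix n i assume n: "max N N' \<le> n" and i: "i \<in> {1..n}"
    have fi: "\<And>j. j \<in> {1..n} \<Longrightarrow> integrable (M n) (f n j)" using 1 n by auto
    have Wn: "0 \<le> W n"
    proof -
      have "(\<integral>\<omega>. \<bar>f n 1 \<omega>\<bar> \<partial>M n) \<le> W n" using 1 n by auto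
      moreover have "0 \<le> (\<integral>\<omega>. \<bar>f n 1 \<omega>\<bar> \<partial>M n)" by simp
      ultimately show ?thesis by linarith
    qed
    have ii: "integrable (M n) (\<lambda>\<omega>. \<Sum>j\<in>{1..n}. \<bar>a n j\<bar> * \<bar>f n j \<omega>\<bar>)" using fi by auto
    have mm: "(\<lambda>\<omega>. \<Sum>j\<in>{1..n}. a n j * f n j \<omega>) \<in> borel_measurable (M n)"
      using fi by (auto intro!: borel_measurable_sum borel_measurable_integrable)
    have bb: "\<And>\<omega>. \<bar>\<Sum>j\<in>{1..n}. a n j * f n j \<omega>\<bar> \<le> (\<Sum>j\<in>{1..n}. \<bar>a n j\<bar> * \<bar>f n j \<omega>\<bar>)"
      using sum_abs[of "\<lambda>j. a n j * f n j _" "{1..n}"] by (simp add: abs_mult)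
    note B = bound_int[OF ii mm bb]
    show "integrable (M n) (\<lambda>\<omega>. \<Sum>j\<in>{1..n}. a n j * f n j \<omega>)" using B by auto
    have "(\<integral>\<omega>. \<bar>\<Sum>j\<in>{1..n}. a n j * f n j \<omega>\<bar> \<partial>M n) \<le> (\<integral>\<omega>. (\<Sum>j\<in>{1..n}. \<bar>a n j\<bar> * \<bar>f n j \<omega>\<bar>) \<partial>M n)" using B by auto
    also have "\<dots> = (\<Sum>j\<in>{1..n}. \<bar>a n j\<bar> * (\<integral>\<omega>. \<bar>f n j \<omega>\<bar> \<partial>M n))" using fi by (simp add: integral_sum)
    also have "\<dots> \<le> (\<Sum>j\<in>{1..n}. \<bar>a n j\<bar> * W n)" using 1 n by (intro sum_mono mult_left_mono) auto
    also have "\<dots> = (\<Sum>j\<in>{1..n}. \<bar>a n j\<bar>) * W n" by (simp add: sum_distrib_right)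
    also have "\<dots> \<le> G * W n" using G n Wn by (intro mult_right_mono) auto
    finally show "(\<integral>\<omega>. \<bar>\<Sum>j\<in>{1..n}. a n j * f n j \<omega>\<bar> \<partial>M n) \<le> G * W n" .
  qed (use 1 in auto)
qed

lemma SV_prod:
  assumes "Van d" "Bnd b"
  shows "SV (\<lambda>n i \<omega>. norm (d n i \<omega>) * norm (b n i \<omega>))"
proof -
  obtain V N1 where 1: "2 \<le> N1" "V \<longlonglongrightarrow> 0" "\<forall>n\<ge>N1. \<forall>i\<in>{1..n}. d n i \<in> borel_measurable (M n)
      \<and> integrable (M n) (\<lambda>\<omega>. (norm (d n i \<omega>))\<^sup>2) \<and> (\<integral>\<omega>. (norm (d n i \<omega>))\<^sup>2 \<partial>M n) \<le> V n"
    using assms(1) unfolding Van_def by blast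
  obtain K N2 where 2: "2 \<le> N2" "\<forall>n\<ge>N2. \<forall>i\<in>{1..n}. b n i \<in> borel_measurable (M n)
      \<and> integrable (M n) (\<lambda>\<omega>. (norm (b n i \<omega>))\<^sup>2) \<and> (\<integral>\<omega>. (norm (b n i \<omega>))\<^sup>2 \<partial>M n) \<le> K"
    using assms(2) unfolding Bnd_def by blast
  define e where "e n = sqrt (\<bar>V n\<bar> + inverse (real (Suc n)))" for n
  have epos: "0 < e n" for n unfolding e_def by (intro real_sqrt_gt_zero add_nonneg_pos) auto
  have esq: "\<bar>V n\<bar> \<le> (e n)\<^sup>2" for n unfolding e_def by simp
  have et: "e \<longlonglongrightarrow> 0"
  proof -
    have "(\<lambda>n. \<bar>V n\<bar> + inverse (real (Suc n))) \<longlonglongrightarrow> 0 + 0"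
      by (intro tendsto_add tendsto_rabs_zero 1(2) LIMSEQ_inverse_real_of_nat)
    then show ?thesis unfolding e_def using tendsto_real_sqrt by fastforce
  qed
  show ?thesis unfolding SV_def
  proof (intro exI[of _ "\<lambda>n. e n * (1 + max K 0) / 2"] exI[of _ "max N1 N2"] conjI allI impI ballI)
    show "(\<lambda>n. e n * (1 + max K 0) / 2) \<longlonglongrightarrow> 0" using tendsto_divide_zero[OF tendsto_mult_left_zero[OF et]] by simp
    fix n i assume n: "max N1 N2 \<le> n" and i: "i \<in> {1..n}"
    have n1: "N1 \<le> n" and n2: "N2 \<le> n" using n by auto
    have dm: "d n i \<in> borel_measurable (M n)" and di: "integrable (M n) (\<lambda>\<omega>. (norm (d n i \<omega>))\<^sup>2)"
      and db: "(\<integral>\<omega>. (norm (d n i \<omega>))\<^sup>2 \<partial>M n) \<le> V n" using 1(3) n1 i by blast+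
    have bm: "b n i \<in> borel_measurable (M n)" and bi: "integrable (M n) (\<lambda>\<omega>. (norm (b n i \<omega>))\<^sup>2)"
      and bb0: "(\<integral>\<omega>. (norm (b n i \<omega>))\<^sup>2 \<partial>M n) \<le> K" using 2(2) n2 i by blast+
    have ii: "integrable (M n) (\<lambda>\<omega>. ((norm (d n i \<omega>))\<^sup>2 / e n + e n * (norm (b n i \<omega>))\<^sup>2) / 2)"
      using di bi by simp
    have mm: "(\<lambda>\<omega>. norm (d n i \<omega>) * norm (b n i \<omega>)) \<in> borel_measurable (M n)" using dm bm by measurable
    have bb: "\<And>\<omega>. \<bar>norm (d n i \<omega>) * norm (b n i \<omega>)\<bar> \<le> ((norm (d n i \<omega>))\<^sup>2 / e n + e n * (norm (b n i \<omega>))\<^sup>2) / 2"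
      using young_eps[OF epos] by simp
    note B = bound_int[OF ii mm bb]
    show "integrable (M n) (\<lambda>\<omega>. norm (d n i \<omega>) * norm (b n i \<omega>))" by (rule B(1))
    have "(\<integral>\<omega>. \<bar>norm (d n i \<omega>) * norm (b n i \<omega>)\<bar> \<partial>M n) \<le> (\<integral>\<omega>. ((norm (d n i \<omega>))\<^sup>2 / e n + e n * (norm (b n i \<omega>))\<^sup>2) / 2 \<partial>M n)" by (rule B(3))
    also have "\<dots> = ((\<integral>\<omega>. (norm (d n i \<omega>))\<^sup>2 \<partial>M n) / e n + e n * (\<integral>\<omega>. (norm (b n i \<omega>))\<^sup>2 \<partial>M n)) / 2"
      using di bi by simp
    also have "\<dots> \<le> (e n + e n * max K 0) / 2"
    proof -
      have "(\<integral>\<omega>. (norm (d n i \<omega>))\<^sup>2 \<partial>M n) / e n \<le> (e n)\<^sup>2 / e n"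
        using db esq[of n] epos[of n] by (intro divide_right_mono) auto
      also have "\<dots> = e n" by (simp add: power2_eq_square)
      finally have x: "(\<integral>\<omega>. (norm (d n i \<omega>))\<^sup>2 \<partial>M n) / e n \<le> e n" .
      have y: "e n * (\<integral>\<omega>. (norm (b n i \<omega>))\<^sup>2 \<partial>M n) \<le> e n * max K 0"
        using bb0 epos[of n] by (intro mult_left_mono) auto
      show ?thesis using add_mono[OF x y] by (intro divide_right_mono) auto
    qed
    also have "\<dots> = e n * (1 + max K 0) / 2" by (simp add: algebra_simps)
    finally show "(\<integral>\<omega>. \<bar>norm (d n i \<omega>) * norm (b n i \<omega>)\<bar> \<partial>M n) \<le> e n * (1 + max K 0) / 2" .
  qed (use 1 in auto)
qed

lemma bil_bound: fixes Q :: "real^'d^'d" shows "\<bar>u \<bullet> (Q *v v)\<bar> \<le> norm Q * (norm u * norm v)"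
proof -
  have "\<bar>u \<bullet> (Q *v v)\<bar> \<le> norm u * norm (Q *v v)" by (rule Cauchy_Schwarz_ineq2)
  also have "\<dots> \<le> norm u * (norm Q * norm v)" by (intro mult_left_mono norm_mv) simp
  finally show ?thesis by (simp add: algebra_simps)
qed

lemma SV_bil:
  fixes a1 a2 b1 b2 :: "nat \<Rightarrow> nat \<Rightarrow> 'w \<Rightarrow> real^'d" and Q :: "real^'d^'d"
  assumes "Bnd a1" "Bnd a2" "Bnd b1" "Bnd b2"
    "Van (\<lambda>n i \<omega>. a1 n i \<omega> - b1 n i \<omega>)" "Van (\<lambda>n i \<omega>. a2 n i \<omega> - b2 n i \<omega>)"
  shows "SV (\<lambda>n i \<omega>. a1 n i \<omega> \<bullet> (Q *v a2 n i \<omega>) - b1 n i \<omega> \<bullet> (Q *v b2 n i \<omega>))"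
proof -
  have s1: "SV (\<lambda>n i \<omega>. norm (a1 n i \<omega> - b1 n i \<omega>) * norm (a2 n i \<omega>))" by (rule SV_prod[OF assms(5,2)])
  have s2: "SV (\<lambda>n i \<omega>. norm (a2 n i \<omega> - b2 n i \<omega>) * norm (b1 n i \<omega>))" by (rule SV_prod[OF assms(6,3)])
  obtain N1 where m1: "\<forall>n\<ge>N1. \<forall>i\<in>{1..n}. a1 n i \<in> borel_measurable (M n)" using assms(1) unfolding Bnd_def by blast
  obtain N2 where m2: "\<forall>n\<ge>N2. \<forall>i\<in>{1..n}. a2 n i \<in> borel_measurable (M n)" using assms(2) unfolding Bnd_def by blast
  obtain N3 where m3: "\<forall>n\<ge>N3. \<forall>i\<in>{1..n}. b1 n i \<in> borel_measurable (M n)" using assms(3) unfolding Bnd_def by blast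
  obtain N4 where m4: "\<forall>n\<ge>N4. \<forall>i\<in>{1..n}. b2 n i \<in> borel_measurable (M n)" using assms(4) unfolding Bnd_def by blast
  have pw: "\<bar>x \<bullet> (Q *v y) - x' \<bullet> (Q *v y')\<bar> \<le> norm Q * (\<bar>norm (x - x') * norm y\<bar> + \<bar>norm (y - y') * norm x'\<bar>)"
    for x y x' y' :: "real^'d"
  proof -
    have eq: "x \<bullet> (Q *v y) - x' \<bullet> (Q *v y') = (x - x') \<bullet> (Q *v y) + x' \<bullet> (Q *v (y - y'))"
      by (simp add: algebra_simps inner_diff_left inner_diff_right)
    have "\<bar>x \<bullet> (Q *v y) - x' \<bullet> (Q *v y')\<bar> \<le> \<bar>(x - x') \<bullet> (Q *v y)\<bar> + \<bar>x' \<bullet> (Q *v (y - y'))\<bar>"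
      unfolding eq by (rule abs_triangle_ineq)
    also have "\<dots> \<le> norm Q * (norm (x - x') * norm y) + norm Q * (norm x' * norm (y - y'))"
      by (intro add_mono bil_bound)
    also have "\<dots> = norm Q * (\<bar>norm (x - x') * norm y\<bar> + \<bar>norm (y - y') * norm x'\<bar>)"
      by (simp add: algebra_simps abs_mult)
    finally show ?thesis .
  qed
  show ?thesis
  proof (rule SV_dom[OF s1 s2, of "norm Q"], simp, rule exI[of _ "max (max N1 N2) (max N3 N4)"], intro allI impI ballI conjI)
    fix n i assume n: "max (max N1 N2) (max N3 N4) \<le> n" and i: "i \<in> {1..n}"
    have "a1 n i \<in> borel_measurable (M n)" "a2 n i \<in> borel_measurable (M n)"
      "b1 n i \<in> borel_measurable (M n)" "b2 n i \<in> borel_measurable (M n)" using m1 m2 m3 m4 n i by auto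
    note mm = this
    have q1: "(\<lambda>\<omega>. Q *v a2 n i \<omega>) \<in> borel_measurable (M n)"
      using mm(2) by (intro borel_measurable_continuous_on[OF matrix_vector_mult_linear_continuous_on])
    have q2: "(\<lambda>\<omega>. Q *v b2 n i \<omega>) \<in> borel_measurable (M n)"
      using mm(4) by (intro borel_measurable_continuous_on[OF matrix_vector_mult_linear_continuous_on])
    show "(\<lambda>\<omega>. a1 n i \<omega> \<bullet> (Q *v a2 n i \<omega>) - b1 n i \<omega> \<bullet> (Q *v b2 n i \<omega>)) \<in> borel_measurable (M n)"
      using mm q1 q2 by (intro borel_measurable_diff borel_measurable_inner)
    fix \<omega> show "\<bar>a1 n i \<omega> \<bullet> (Q *v a2 n i \<omega>) - b1 n i \<omega> \<bullet> (Q *v b2 n i \<omega>)\<bar>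
         \<le> norm Q * (\<bar>norm (a1 n i \<omega> - b1 n i \<omega>) * norm (a2 n i \<omega>)\<bar> + \<bar>norm (a2 n i \<omega> - b2 n i \<omega>) * norm (b1 n i \<omega>)\<bar>)"
      by (rule pw)
  qed
qed

end

lemma indep_pair:
  assumes P: "prob_space P" and ind: "prob_space.indep_vars P (\<lambda>_. borel) X I"
    and ab: "a \<in> I" "b \<in> I" "a \<noteq> b"
    and f: "f \<in> borel_measurable borel" and g: "g \<in> borel_measurable borel"
  shows "prob_space.indep_var P borel (\<lambda>\<omega>. f (X a \<omega>)) borel (\<lambda>\<omega>. g (X b \<omega>))"
proof -
  interpret prob_space P by (rule P)
  have iv: "indep_var (PiM {a} (\<lambda>_. borel)) (\<lambda>\<omega>. restrict (\<lambda>i. X i \<omega>) {a}) (PiM {b} (\<lambda>_. borel)) (\<lambda>\<omega>. restrict (\<lambda>i. X i \<omega>) {b})"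
    using indep_var_restrict[OF ind] ab by auto
  have ca: "(\<lambda>x. x a) \<in> measurable (PiM {a} (\<lambda>_. borel)) borel" by (rule measurable_component_singleton) simp
  have cb: "(\<lambda>x. x b) \<in> measurable (PiM {b} (\<lambda>_. borel)) borel" by (rule measurable_component_singleton) simp
  have mf: "(\<lambda>x. f (x a)) \<in> measurable (PiM {a} (\<lambda>_. borel)) borel"
    by (rule measurable_compose[OF ca f])
  have mg: "(\<lambda>x. g (x b)) \<in> measurable (PiM {b} (\<lambda>_. borel)) borel"
    by (rule measurable_compose[OF cb g])
  from indep_var_compose[OF iv mf mg] show ?thesis by (simp add: comp_def)
qed

lemma inner_le_sq: "\<bar>(x::'a::real_inner) \<bullet> y\<bar> \<le> ((norm x)\<^sup>2 + (norm y)\<^sup>2) / 2"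
proof -
  have "\<bar>x \<bullet> y\<bar> \<le> norm x * norm y" by (rule Cauchy_Schwarz_ineq2)
  also have "\<dots> \<le> ((norm x)\<^sup>2 / 1 + 1 * (norm y)\<^sup>2) / 2" by (rule young_eps) simp
  finally show ?thesis by simp
qed

lemma lln:
  fixes Z :: "nat \<Rightarrow> 'w \<Rightarrow> real^'d"
  assumes P: "prob_space P" and S: "finite S"
    and meas: "\<And>j. j \<in> S \<Longrightarrow> Z j \<in> borel_measurable P"
    and sq: "\<And>j. j \<in> S \<Longrightarrow> integrable P (\<lambda>\<omega>. (norm (Z j \<omega>))\<^sup>2)"
    and int: "\<And>j. j \<in> S \<Longrightarrow> integrable P (Z j)"
    and mean: "\<And>j. j \<in> S \<Longrightarrow> (\<integral>\<omega>. Z j \<omega> \<partial>P) = 0"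
    and ind: "\<And>j k c. j \<in> S \<Longrightarrow> k \<in> S \<Longrightarrow> j \<noteq> k \<Longrightarrow>
                prob_space.indep_var P borel (\<lambda>\<omega>. Z j \<omega> $ c) borel (\<lambda>\<omega>. Z k \<omega> $ c)"
  shows "integrable P (\<lambda>\<omega>. (norm (\<Sum>j\<in>S. a j *\<^sub>R Z j \<omega>))\<^sup>2)"
    "(\<integral>\<omega>. (norm (\<Sum>j\<in>S. a j *\<^sub>R Z j \<omega>))\<^sup>2 \<partial>P) = (\<Sum>j\<in>S. (a j)\<^sup>2 * (\<integral>\<omega>. (norm (Z j \<omega>))\<^sup>2 \<partial>P))"
proof -
  interpret prob_space P by (rule P)
  have ci: "integrable P (\<lambda>\<omega>. Z j \<omega> \<bullet> Z k \<omega>)" if "j \<in> S" "k \<in> S" for j k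
  proof -
    have ii: "integrable P (\<lambda>\<omega>. ((norm (Z j \<omega>))\<^sup>2 + (norm (Z k \<omega>))\<^sup>2) / 2)" using sq that by auto
    have mm: "(\<lambda>\<omega>. Z j \<omega> \<bullet> Z k \<omega>) \<in> borel_measurable P" using meas that by (intro borel_measurable_inner) auto
    show ?thesis by (rule bound_int(1)[OF ii mm inner_le_sq])
  qed
  have comp_int: "integrable P (\<lambda>\<omega>. Z j \<omega> $ c)" and comp_mean: "(\<integral>\<omega>. Z j \<omega> $ c \<partial>P) = 0" if "j \<in> S" for j c
  proof -
    have e: "\<And>\<omega>. Z j \<omega> $ c = Z j \<omega> \<bullet> axis c 1" by (simp add: cart_eq_inner_axis)
    show "integrable P (\<lambda>\<omega>. Z j \<omega> $ c)" unfolding e using int that by auto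
    show "(\<integral>\<omega>. Z j \<omega> $ c \<partial>P) = 0" unfolding e using int mean that by simp
  qed
  have c0: "(\<integral>\<omega>. Z j \<omega> \<bullet> Z k \<omega> \<partial>P) = 0" if "j \<in> S" "k \<in> S" "j \<noteq> k" for j k
  proof -
    have e: "\<And>\<omega>. Z j \<omega> \<bullet> Z k \<omega> = (\<Sum>c\<in>UNIV. Z j \<omega> $ c * Z k \<omega> $ c)" by (simp add: inner_vec_def)
    have "(\<integral>\<omega>. Z j \<omega> \<bullet> Z k \<omega> \<partial>P) = (\<Sum>c\<in>UNIV. \<integral>\<omega>. Z j \<omega> $ c * Z k \<omega> $ c \<partial>P)"
    proof -
      have "\<And>c. integrable P (\<lambda>\<omega>. Z j \<omega> $ c * Z k \<omega> $ c)"
        using indep_var_integrable[OF ind[OF that] comp_int comp_int] that by auto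
      then show ?thesis unfolding e by (intro Bochner_Integration.integral_sum) auto
    qed
    also have "\<dots> = (\<Sum>c\<in>UNIV. (\<integral>\<omega>. Z j \<omega> $ c \<partial>P) * (\<integral>\<omega>. Z k \<omega> $ c \<partial>P))"
      using indep_var_lebesgue_integral[OF ind[OF that] comp_int comp_int] that by auto
    also have "\<dots> = 0" using comp_mean that by simp
    finally show ?thesis .
  qed
  have expand: "(norm (\<Sum>j\<in>S. a j *\<^sub>R Z j \<omega>))\<^sup>2 = (\<Sum>j\<in>S. \<Sum>k\<in>S. a j * a k * (Z j \<omega> \<bullet> Z k \<omega>))" for \<omega>
    by (simp add: power2_norm_eq_inner inner_sum_left inner_sum_right sum_distrib_left mult.assoc)
       (rule sum.cong[OF refl], rule sum.cong[OF refl], simp add: inner_commute)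
  have ii: "integrable P (\<lambda>\<omega>. \<Sum>j\<in>S. \<Sum>k\<in>S. a j * a k * (Z j \<omega> \<bullet> Z k \<omega>))"
    using ci by auto
  show "integrable P (\<lambda>\<omega>. (norm (\<Sum>j\<in>S. a j *\<^sub>R Z j \<omega>))\<^sup>2)" unfolding expand by (rule ii)
  have "(\<integral>\<omega>. (norm (\<Sum>j\<in>S. a j *\<^sub>R Z j \<omega>))\<^sup>2 \<partial>P) = (\<Sum>j\<in>S. \<Sum>k\<in>S. a j * a k * (\<integral>\<omega>. Z j \<omega> \<bullet> Z k \<omega> \<partial>P))"
    unfolding expand using ci by (simp add: Bochner_Integration.integral_sum)
  also have "\<dots> = (\<Sum>j\<in>S. a j * a j * (\<integral>\<omega>. Z j \<omega> \<bullet> Z j \<omega> \<partial>P))"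
  proof (rule sum.cong[OF refl])
    fix j assume j: "j \<in> S"
    have "(\<Sum>k\<in>S. a j * a k * (\<integral>\<omega>. Z j \<omega> \<bullet> Z k \<omega> \<partial>P)) = (\<Sum>k\<in>S. if k = j then a j * a j * (\<integral>\<omega>. Z j \<omega> \<bullet> Z j \<omega> \<partial>P) else 0)"
      using c0 j by (intro sum.cong) auto
    also have "\<dots> = a j * a j * (\<integral>\<omega>. Z j \<omega> \<bullet> Z j \<omega> \<partial>P)" using S j by simp
    finally show "(\<Sum>k\<in>S. a j * a k * (\<integral>\<omega>. Z j \<omega> \<bullet> Z k \<omega> \<partial>P)) = a j * a j * (\<integral>\<omega>. Z j \<omega> \<bullet> Z j \<omega> \<partial>P)" .
  qed
  also have "\<dots> = (\<Sum>j\<in>S. (a j)\<^sup>2 * (\<integral>\<omega>. (norm (Z j \<omega>))\<^sup>2 \<partial>P))"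
    by (simp add: power2_norm_eq_inner[symmetric] power2_eq_square)
  finally show "(\<integral>\<omega>. (norm (\<Sum>j\<in>S. a j *\<^sub>R Z j \<omega>))\<^sup>2 \<partial>P) = (\<Sum>j\<in>S. (a j)\<^sup>2 * (\<integral>\<omega>. (norm (Z j \<omega>))\<^sup>2 \<partial>P))" .
qed

primrec st :: "('x::finite,'u::finite) lqm \<Rightarrow> nat \<Rightarrow> (nat \<Rightarrow> real) \<Rightarrow> ('x,'u) strat \<Rightarrow> (nat \<Rightarrow> real^'x)
   \<Rightarrow> (nat \<Rightarrow> nat \<Rightarrow> real^'x) \<Rightarrow> nat \<Rightarrow> nat \<Rightarrow> real^'x" where
  "st m n a g x1 w 0 = (\<lambda>j. 0)"
| "st m n a g x1 w (Suc t) = (\<lambda>j. if j \<in> {1..n} then (if t = 0 then x1 j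
      else next_state m n a g w t (\<lambda>s. st m n a g x1 w t) j) else 0)"

definition loc :: "('x::finite,'u::finite) strat \<Rightarrow> bool" where
  "loc g \<longleftrightarrow> (\<forall>j t H H'. H t = H' t \<longrightarrow> g j t H = g j t H')"

lemma next_state_cong:
  assumes "loc g" "H t = H' t"
  shows "next_state m n a g w t H j = next_state m n a g w t H' j"
proof -
  have "\<And>k. g k t H = g k t H'" using assms unfolding loc_def by blast
  then show ?thesis unfolding next_state_def using assms(2) by simp
qed

lemma hist_diag:
  assumes "loc g" shows "hist m n a g x1 w t t = st m n a g x1 w t"
proof (induction t)
  case 0 then show ?case by simp
next
  case (Suc t)
  have "next_state m n a g w t (hist m n a g x1 w t) j = next_state m n a g w t (\<lambda>s. st m n a g x1 w t) j" for j
    by (rule next_state_cong[OF assms]) (simp add: Suc.IH)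
  then show ?case by (intro ext) simp
qed

lemma rcost_st:
  assumes "loc g"
  shows "rcost m T n a x1 w g t0 i \<omega> =
    (\<Sum>t\<in>{t0..T}. stage_cost m n a t i (st m n a g (\<lambda>j. x1 j \<omega>) (\<lambda>t j. w t j \<omega>) t)
        (\<lambda>j. g j t (\<lambda>s. st m n a g (\<lambda>j. x1 j \<omega>) (\<lambda>t j. w t j \<omega>) t)))"
proof -
  note h = hist_diag[OF assms, of m n a "\<lambda>j. x1 j \<omega>" "\<lambda>t j. w t j \<omega>"]
  have g: "g j t (hist m n a g (\<lambda>j. x1 j \<omega>) (\<lambda>t j. w t j \<omega>) t) = g j t (\<lambda>s. st m n a g (\<lambda>j. x1 j \<omega>) (\<lambda>t j. w t j \<omega>) t)" for j t
    by (rule assms[unfolded loc_def, rule_format]) (simp only: h)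
  show ?thesis unfolding rcost_def cost_from_def by (simp only: h g)
qed

lemma loc_lin: "loc (lin_profile n a th thb)" unfolding loc_def lin_profile_def by simp
lemma loc_ns: "loc (noshare_profile th thb z)" unfolding loc_def noshare_profile_def by simp

lemma st_one: "j \<in> {1..n} \<Longrightarrow> st m n a g x1 w (Suc 0) j = x1 j" by simp

lemma st_Suc: "j \<in> {1..n} \<Longrightarrow> 1 \<le> t \<Longrightarrow> st m n a g x1 w (Suc t) j = next_state m n a g w t (\<lambda>s. st m n a g x1 w t) j"
  by simp

lemma wavg_add: "wavg n a (\<lambda>k. f k + g k) = wavg n a f + wavg n a g"
  unfolding wavg_def by (simp add: scaleR_add_right sum.distrib)

lemma wavg_diff: "wavg n a (\<lambda>k. f k - g k) = wavg n a f - wavg n a g"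
  unfolding wavg_def by (simp add: scaleR_diff_right sum_subtractf)

lemma wavg_mat: fixes C :: "real^'n^'m" shows "wavg n a (\<lambda>k. C *v f k) = C *v wavg n a f"
proof -
  have "C *v (\<Sum>k\<in>{1..n}. a k *\<^sub>R f k) = (\<Sum>k\<in>{1..n}. C *v (a k *\<^sub>R f k))"
    using linear_sum[OF matrix_vector_mul_linear, of C "\<lambda>k. a k *\<^sub>R f k" "{1..n}"] by (simp add: comp_def)
  then show ?thesis unfolding wavg_def by (simp add: matrix_vector_mult_scaleR)
qed

lemma wavg_const: "(\<Sum>i\<in>{1..n}. a i) = 1 \<Longrightarrow> wavg n a (\<lambda>k. c) = c"
  unfolding wavg_def by (simp add: scaleR_sum_left[symmetric])

lemma wavg_cong: "(\<And>k. k \<in> {1..n} \<Longrightarrow> f k = g k) \<Longrightarrow> wavg n a f = wavg n a g"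
  unfolding wavg_def by simp

definition MB :: "(nat \<Rightarrow> real^'n^'m) \<Rightarrow> bool" where
  "MB C \<longleftrightarrow> (\<exists>K N. \<forall>n\<ge>N. norm (C n) \<le> K)"

lemma MB_const: "MB (\<lambda>n. C)" unfolding MB_def by blast

lemma MB_add: assumes "MB C" "MB D" shows "MB (\<lambda>n. C n + D n)"
proof -
  obtain K1 N1 where 1: "\<forall>n\<ge>N1. norm (C n) \<le> K1" using assms(1) unfolding MB_def by blast
  obtain K2 N2 where 2: "\<forall>n\<ge>N2. norm (D n) \<le> K2" using assms(2) unfolding MB_def by blast
  show ?thesis unfolding MB_def
  proof (intro exI[of _ "K1 + K2"] exI[of _ "max N1 N2"] allI impI)
    fix n assume "max N1 N2 \<le> n"
    then have "norm (C n) \<le> K1" "norm (D n) \<le> K2" using 1 2 by auto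
    then show "norm (C n + D n) \<le> K1 + K2" by (smt (verit) norm_triangle_ineq)
  qed
qed

lemma MB_diff: assumes "MB C" "MB D" shows "MB (\<lambda>n. C n - D n)"
proof -
  have "MB (\<lambda>n. - D n)" using assms(2) unfolding MB_def by simp
  from MB_add[OF assms(1) this] show ?thesis by simp
qed

context fam begin

lemma Bnd_matM: "MB C \<Longrightarrow> Bnd F \<Longrightarrow> Bnd (\<lambda>n i \<omega>. C n *v F n i \<omega>)"
  by (rule Bnd_mat) (auto simp: MB_def)

lemma Van_matM: "MB C \<Longrightarrow> Van F \<Longrightarrow> Van (\<lambda>n i \<omega>. C n *v F n i \<omega>)"
  by (rule Van_mat) (auto simp: MB_def)

lemma cong2: "(\<And>n i \<omega>. 2 \<le> n \<Longrightarrow> i \<in> {1..n} \<Longrightarrow> G n i \<omega> = F n i \<omega>) \<Longrightarrow>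
   \<exists>N. \<forall>n\<ge>N. \<forall>i\<in>{1..n}. \<forall>\<omega>\<in>space (M n). G n i \<omega> = F n i \<omega>"
  by (intro exI[of _ 2]) auto

end

lemma sc_diff: "stage_cost m n a t i X U - stage_cost m n a t i X' U' =
  (X i \<bullet> (mQ m t *v X i) - X' i \<bullet> (mQ m t *v X' i))
  + 2 * (X i \<bullet> (mSx m t *v wavg n a X) - X' i \<bullet> (mSx m t *v wavg n a X'))
  + (wavg n a X \<bullet> (mQb m t *v wavg n a X) - wavg n a X' \<bullet> (mQb m t *v wavg n a X'))
  + (U i \<bullet> (mR m t *v U i) - U' i \<bullet> (mR m t *v U' i))
  + 2 * (U i \<bullet> (mSu m t *v wavg n a U) - U' i \<bullet> (mSu m t *v wavg n a U'))
  + (wavg n a U \<bullet> (mRb m t *v wavg n a U) - wavg n a U' \<bullet> (mRb m t *v wavg n a U'))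
  + (\<Sum>j\<in>{1..n}. a j * ((X j \<bullet> (mGx m t *v X j) - X' j \<bullet> (mGx m t *v X' j))
        + (U j \<bullet> (mGu m t *v U j) - U' j \<bullet> (mGu m t *v U' j))))"
proof -
  have "(\<Sum>j\<in>{1..n}. a j * ((X j \<bullet> (mGx m t *v X j) - X' j \<bullet> (mGx m t *v X' j))
        + (U j \<bullet> (mGu m t *v U j) - U' j \<bullet> (mGu m t *v U' j)))) =
    (\<Sum>j\<in>{1..n}. a j * (X j \<bullet> (mGx m t *v X j) + U j \<bullet> (mGu m t *v U j))) -
    (\<Sum>j\<in>{1..n}. a j * (X' j \<bullet> (mGx m t *v X' j) + U' j \<bullet> (mGu m t *v U' j)))"
    by (simp add: sum_subtractf[symmetric] algebra_simps)
  then show ?thesis unfolding stage_cost_def Let_def by simp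
qed

locale lqs = fam M for M :: "nat \<Rightarrow> 'w measure" +
  fixes m :: "('x::finite,'u::finite) lqm" and T :: nat
    and \<alpha> :: "nat \<Rightarrow> nat \<Rightarrow> real"
    and x1 :: "nat \<Rightarrow> nat \<Rightarrow> 'w \<Rightarrow> real^'x"
    and w :: "nat \<Rightarrow> nat \<Rightarrow> nat \<Rightarrow> 'w \<Rightarrow> real^'x"
    and \<mu>x :: "real^'x"
    and \<theta> \<theta>b th thb :: "nat \<Rightarrow> nat \<Rightarrow> real^'x^'u"
  assumes wsum: "\<And>n. 2 \<le> n \<Longrightarrow> (\<Sum>i\<in>{1..n}. \<alpha> n i) = 1"
    and abs_bound: "\<exists>G N. \<forall>n\<ge>N. (\<Sum>j\<in>{1..n}. \<bar>\<alpha> n j\<bar>) \<le> G"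
    and lln_x: "Van (\<lambda>n i \<omega>. wavg n (\<alpha> n) (\<lambda>j. x1 n j \<omega>) - \<mu>x)"
    and lln_w: "\<And>t. t \<in> {1..T} \<Longrightarrow> Van (\<lambda>n i \<omega>. wavg n (\<alpha> n) (\<lambda>j. w n t j \<omega>))"
    and x1_bnd: "Bnd (\<lambda>n i \<omega>. x1 n i \<omega>)"
    and w_bnd: "\<And>t. t \<in> {1..T} \<Longrightarrow> Bnd (\<lambda>n i \<omega>. w n t i \<omega>)"
    and init: "\<And>n. 2 \<le> n \<Longrightarrow> init_mean n (\<alpha> n) (M n) (x1 n) = \<mu>x"
    and th_bnd: "\<And>t. t \<in> {1..T} \<Longrightarrow> MB (\<lambda>n. \<theta> n t) \<and> MB (\<lambda>n. \<theta>b n t) \<and> MB (\<lambda>n. th n t) \<and> MB (\<lambda>n. thb n t)"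
    and th_conv: "\<And>t. t \<in> {1..T} \<Longrightarrow> (\<lambda>n. th n t - \<theta> n t) \<longlonglongrightarrow> 0 \<and> (\<lambda>n. thb n t - \<theta>b n t) \<longlonglongrightarrow> 0"
    and lin_int: "\<exists>N. \<forall>n\<ge>N. \<forall>t0\<in>{1..T}. \<forall>i\<in>{1..n}.
        integrable (M n) (rcost m T n (\<alpha> n) (x1 n) (w n) (lin_profile n (\<alpha> n) (\<theta> n) (\<theta>b n)) t0 i)"
begin

definition "gL n = lin_profile n (\<alpha> n) (\<theta> n) (\<theta>b n)"
definition "zz n = zpred m (thb n) (init_mean n (\<alpha> n) (M n) (x1 n))"
definition "gN n = noshare_profile (th n) (thb n) (zz n)"
definition "XL n t j \<omega> = st m n (\<alpha> n) (gL n) (\<lambda>j. x1 n j \<omega>) (\<lambda>t j. w n t j \<omega>) t j"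
definition "XN n t j \<omega> = st m n (\<alpha> n) (gN n) (\<lambda>j. x1 n j \<omega>) (\<lambda>t j. w n t j \<omega>) t j"
definition "xL n t \<omega> = wavg n (\<alpha> n) (\<lambda>j. XL n t j \<omega>)"
definition "xN n t \<omega> = wavg n (\<alpha> n) (\<lambda>j. XN n t j \<omega>)"
definition "uL n t j \<omega> = \<theta> n t *v XL n t j \<omega> + (\<theta>b n t - \<theta> n t) *v xL n t \<omega>"
definition "uN n t j \<omega> = th n t *v XN n t j \<omega> + (thb n t - th n t) *v zz n t"
definition "ubL n t \<omega> = wavg n (\<alpha> n) (\<lambda>j. uL n t j \<omega>)"
definition "ubN n t \<omega> = wavg n (\<alpha> n) (\<lambda>j. uN n t j \<omega>)"
definition "wb n t \<omega> = wavg n (\<alpha> n) (\<lambda>j. w n t j \<omega>)"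

lemma XL_1: "j \<in> {1..n} \<Longrightarrow> XL n (Suc 0) j \<omega> = x1 n j \<omega>"
  unfolding XL_def by simp
lemma XN_1: "j \<in> {1..n} \<Longrightarrow> XN n (Suc 0) j \<omega> = x1 n j \<omega>"
  unfolding XN_def by simp

lemma XL_Suc: "j \<in> {1..n} \<Longrightarrow> 1 \<le> t \<Longrightarrow> XL n (Suc t) j \<omega> =
   mA m t *v XL n t j \<omega> + mB m t *v uL n t j \<omega> + mAb m t *v xL n t \<omega> + mBb m t *v ubL n t \<omega> + w n t j \<omega>"
  unfolding XL_def st_Suc next_state_def uL_def xL_def ubL_def gL_def lin_profile_def XL_def by simp

lemma XN_Suc: "j \<in> {1..n} \<Longrightarrow> 1 \<le> t \<Longrightarrow> XN n (Suc t) j \<omega> =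
   mA m t *v XN n t j \<omega> + mB m t *v uN n t j \<omega> + mAb m t *v xN n t \<omega> + mBb m t *v ubN n t \<omega> + w n t j \<omega>"
  unfolding XN_def st_Suc next_state_def uN_def xN_def ubN_def gN_def noshare_profile_def XN_def by simp

lemma ubL_eq: assumes n: "2 \<le> n" shows "ubL n t \<omega> = \<theta>b n t *v xL n t \<omega>"
proof -
  have "ubL n t \<omega> = \<theta> n t *v xL n t \<omega> + (\<theta>b n t - \<theta> n t) *v xL n t \<omega>"
    unfolding ubL_def uL_def by (simp only: wavg_add wavg_mat wavg_const[OF wsum[OF n]] xL_def[symmetric])
  then show ?thesis by (simp add: algebra_simps)
qed

lemma ubN_eq: assumes n: "2 \<le> n" shows " ubN n t \<omega> = th n t *v xN n t \<omega> + (thb n t - th n t) *v zz n t"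
  unfolding ubN_def uN_def
  by (simp only: wavg_const[OF wsum[OF n]] wavg_add wavg_mat wavg_const xN_def[symmetric])

lemma xL_1: "xL n (Suc 0) \<omega> = wavg n (\<alpha> n) (\<lambda>j. x1 n j \<omega>)"
  unfolding xL_def by (rule wavg_cong) (simp add: XL_1)
lemma xN_1: "xN n (Suc 0) \<omega> = wavg n (\<alpha> n) (\<lambda>j. x1 n j \<omega>)"
  unfolding xN_def by (rule wavg_cong) (simp add: XN_1)

lemma xL_Suc: "2 \<le> n \<Longrightarrow> 1 \<le> t \<Longrightarrow> xL n (Suc t) \<omega> =
   mA m t *v xL n t \<omega> + mB m t *v ubL n t \<omega> + mAb m t *v xL n t \<omega> + mBb m t *v ubL n t \<omega> + wb n t \<omega>"
proof -
  assume n: "2 \<le> n" and t: "1 \<le> t"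
  have "xL n (Suc t) \<omega> = wavg n (\<alpha> n) (\<lambda>j. mA m t *v XL n t j \<omega> + mB m t *v uL n t j \<omega> + mAb m t *v xL n t \<omega> + mBb m t *v ubL n t \<omega> + w n t j \<omega>)"
    using t by (subst xL_def, intro wavg_cong) (simp add: XL_Suc)
  also have "\<dots> = mA m t *v xL n t \<omega> + mB m t *v ubL n t \<omega> + mAb m t *v xL n t \<omega> + mBb m t *v ubL n t \<omega> + wb n t \<omega>"
    using wsum[OF n] by (simp add: wavg_add wavg_mat wavg_const xL_def[symmetric] ubL_def[symmetric] wb_def[symmetric])
  finally show ?thesis .
qed

lemma xN_Suc: "2 \<le> n \<Longrightarrow> 1 \<le> t \<Longrightarrow> xN n (Suc t) \<omega> =
   mA m t *v xN n t \<omega> + mB m t *v ubN n t \<omega> + mAb m t *v xN n t \<omega> + mBb m t *v ubN n t \<omega> + wb n t \<omega>"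
proof -
  assume n: "2 \<le> n" and t: "1 \<le> t"
  have "xN n (Suc t) \<omega> = wavg n (\<alpha> n) (\<lambda>j. mA m t *v XN n t j \<omega> + mB m t *v uN n t j \<omega> + mAb m t *v xN n t \<omega> + mBb m t *v ubN n t \<omega> + w n t j \<omega>)"
    using t by (subst xN_def, intro wavg_cong) (simp add: XN_Suc)
  also have "\<dots> = mA m t *v xN n t \<omega> + mB m t *v ubN n t \<omega> + mAb m t *v xN n t \<omega> + mBb m t *v ubN n t \<omega> + wb n t \<omega>"
    using wsum[OF n] by (simp add: wavg_add wavg_mat wavg_const xN_def[symmetric] ubN_def[symmetric] wb_def[symmetric])
  finally show ?thesis .
qed

lemma zz_1: "2 \<le> n \<Longrightarrow> zz n (Suc 0) = \<mu>x"
  unfolding zz_def using init by simp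

lemma zz_Suc: "1 \<le> t \<Longrightarrow> zz n (Suc t) =
   mA m t *v zz n t + mAb m t *v zz n t + mB m t *v (thb n t *v zz n t) + mBb m t *v (thb n t *v zz n t)"
  unfolding zz_def by (simp add: matrix_vector_mult_add_rdistrib matrix_vector_mul_assoc[symmetric])

lemma wbV: "t \<in> {1..T} \<Longrightarrow> Van (\<lambda>n i \<omega>. wb n t \<omega>)"
  unfolding wb_def by (rule lln_w)

lemma MBs: assumes "t \<in> {1..T}"
  shows "MB (\<lambda>n. \<theta> n t)" "MB (\<lambda>n. \<theta>b n t)" "MB (\<lambda>n. th n t)" "MB (\<lambda>n. thb n t)"
    "MB (\<lambda>n. \<theta>b n t - \<theta> n t)"
  using th_bnd[OF assms] MB_diff by auto

lemma convs: assumes "t \<in> {1..T}"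
  shows "(\<lambda>n. th n t - \<theta> n t) \<longlonglongrightarrow> 0"
    "(\<lambda>n. (thb n t - th n t) - (\<theta>b n t - \<theta> n t)) \<longlonglongrightarrow> 0"
    "(\<lambda>n. \<theta>b n t - thb n t) \<longlonglongrightarrow> 0"
proof -
  note c = th_conv[OF assms]
  show "(\<lambda>n. th n t - \<theta> n t) \<longlonglongrightarrow> 0" using c by simp
  have "(\<lambda>n. (thb n t - \<theta>b n t) - (th n t - \<theta> n t)) \<longlonglongrightarrow> 0 - 0"
    using c by (intro tendsto_diff) auto
  then show "(\<lambda>n. (thb n t - th n t) - (\<theta>b n t - \<theta> n t)) \<longlonglongrightarrow> 0" by (simp add: algebra_simps)
  have "(\<lambda>n. - (thb n t - \<theta>b n t)) \<longlonglongrightarrow> - 0"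
    using c by (intro tendsto_minus) auto
  then show "(\<lambda>n. \<theta>b n t - thb n t) \<longlonglongrightarrow> 0" by simp
qed

lemmas MA = MB_const[of "mA m t"] MB_const[of "mB m t"] MB_const[of "mAb m t"] MB_const[of "mBb m t"] for t

definition "IH t \<longleftrightarrow> Bnd (\<lambda>n i \<omega>. XN n t i \<omega>) \<and> Van (\<lambda>n i \<omega>. XN n t i \<omega> - XL n t i \<omega>)
   \<and> Van (\<lambda>n i \<omega>. xN n t \<omega> - zz n t) \<and> Van (\<lambda>n i \<omega>. xL n t \<omega> - zz n t) \<and> Bnd (\<lambda>n i \<omega>. zz n t)"

lemma IH_1: "IH (Suc 0)"
  unfolding IH_def
proof (intro conjI)
  show "Bnd (\<lambda>n i \<omega>. XN n (Suc 0) i \<omega>)"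
    by (rule Bnd_cong[OF x1_bnd], rule cong2) (simp add: XN_1)
  show "Van (\<lambda>n i \<omega>. XN n (Suc 0) i \<omega> - XL n (Suc 0) i \<omega>)"
    by (rule Van_cong[OF Van_zero], rule cong2) (simp add: XN_1 XL_1)
  show "Van (\<lambda>n i \<omega>. xN n (Suc 0) \<omega> - zz n (Suc 0))"
    by (rule Van_cong[OF lln_x], rule cong2) (simp add: xN_1 zz_1)
  show "Van (\<lambda>n i \<omega>. xL n (Suc 0) \<omega> - zz n (Suc 0))"
    by (rule Van_cong[OF lln_x], rule cong2) (simp add: xL_1 zz_1)
  show "Bnd (\<lambda>n i \<omega>. zz n (Suc 0))"
    by (rule Bnd_cong[OF Bnd_const[of "\<lambda>n. \<mu>x"]], blast, rule cong2) (simp add: zz_1)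
qed

lemma IH_derived:
  assumes IH: "IH t" and t: "t \<in> {1..T}"
  shows "Bnd (\<lambda>n i \<omega>. XN n t i \<omega>)" "Bnd (\<lambda>n i \<omega>. XL n t i \<omega>)"
    "Van (\<lambda>n i \<omega>. XN n t i \<omega> - XL n t i \<omega>)"
    "Van (\<lambda>n i \<omega>. xN n t \<omega> - zz n t)" "Van (\<lambda>n i \<omega>. xL n t \<omega> - zz n t)" "Bnd (\<lambda>n i \<omega>. zz n t)"
    "Bnd (\<lambda>n i \<omega>. xN n t \<omega>)" "Bnd (\<lambda>n i \<omega>. xL n t \<omega>)"
    "Van (\<lambda>n i \<omega>. xN n t \<omega> - xL n t \<omega>)"
    "Bnd (\<lambda>n i \<omega>. uN n t i \<omega>)" "Bnd (\<lambda>n i \<omega>. uL n t i \<omega>)"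
    "Bnd (\<lambda>n i \<omega>. ubN n t \<omega>)" "Bnd (\<lambda>n i \<omega>. ubL n t \<omega>)"
    "Van (\<lambda>n i \<omega>. uN n t i \<omega> - uL n t i \<omega>)"
    "Van (\<lambda>n i \<omega>. ubN n t \<omega> - ubL n t \<omega>)"
proof -
  note M = MBs[OF t] and C = convs[OF t]
  have XNB: "Bnd (\<lambda>n i \<omega>. XN n t i \<omega>)" and DV: "Van (\<lambda>n i \<omega>. XN n t i \<omega> - XL n t i \<omega>)"
    and eV: "Van (\<lambda>n i \<omega>. xN n t \<omega> - zz n t)" and fV: "Van (\<lambda>n i \<omega>. xL n t \<omega> - zz n t)"
    and zB: "Bnd (\<lambda>n i \<omega>. zz n t)" using IH unfolding IH_def by auto
  show "Bnd (\<lambda>n i \<omega>. XN n t i \<omega>)" "Van (\<lambda>n i \<omega>. XN n t i \<omega> - XL n t i \<omega>)"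
    "Van (\<lambda>n i \<omega>. xN n t \<omega> - zz n t)" "Van (\<lambda>n i \<omega>. xL n t \<omega> - zz n t)" "Bnd (\<lambda>n i \<omega>. zz n t)"
    using XNB DV eV fV zB by auto
  show XLB: "Bnd (\<lambda>n i \<omega>. XL n t i \<omega>)"
    by (rule Bnd_cong[OF Bnd_diff[OF XNB Van_Bnd[OF DV]]], rule cong2) simp
  show xNB: "Bnd (\<lambda>n i \<omega>. xN n t \<omega>)"
    by (rule Bnd_cong[OF Bnd_add[OF Van_Bnd[OF eV] zB]], rule cong2) simp
  show xLB: "Bnd (\<lambda>n i \<omega>. xL n t \<omega>)"
    by (rule Bnd_cong[OF Bnd_add[OF Van_Bnd[OF fV] zB]], rule cong2) simp
  show "Van (\<lambda>n i \<omega>. xN n t \<omega> - xL n t \<omega>)"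
    by (rule Van_cong[OF Van_diff[OF eV fV]], rule cong2) simp
  show "Bnd (\<lambda>n i \<omega>. uN n t i \<omega>)"
    by (rule Bnd_cong[OF Bnd_add[OF Bnd_matM[OF M(3) XNB] Bnd_matM[OF MB_diff[OF M(4) M(3)] zB]]], rule cong2)
       (simp add: uN_def)
  show "Bnd (\<lambda>n i \<omega>. uL n t i \<omega>)"
    by (rule Bnd_cong[OF Bnd_add[OF Bnd_matM[OF M(1) XLB] Bnd_matM[OF M(5) xLB]]], rule cong2)
       (simp add: uL_def)
  show "Bnd (\<lambda>n i \<omega>. ubN n t \<omega>)"
    by (rule Bnd_cong[OF Bnd_add[OF Bnd_matM[OF M(3) xNB] Bnd_matM[OF MB_diff[OF M(4) M(3)] zB]]], rule cong2)
       (simp add: ubN_eq)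
  show "Bnd (\<lambda>n i \<omega>. ubL n t \<omega>)"
    by (rule Bnd_cong[OF Bnd_matM[OF M(2) xLB]], rule cong2) (simp add: ubL_eq)
  show "Van (\<lambda>n i \<omega>. uN n t i \<omega> - uL n t i \<omega>)"
    by (rule Van_cong[OF Van_diff[OF Van_add[OF Van_add[OF Van_matM[OF M(1) DV] Van_mat0[OF C(1) XNB]]
          Van_mat0[OF C(2) zB]] Van_matM[OF M(5) fV]]], rule cong2)
       (simp add: uN_def uL_def algebra_simps)
  show "Van (\<lambda>n i \<omega>. ubN n t \<omega> - ubL n t \<omega>)"
    by (rule Van_cong[OF Van_add[OF Van_diff[OF Van_matM[OF M(3) eV] Van_matM[OF M(2) fV]]
          Van_mat0[OF C(3)[THEN tendsto_minus, simplified] zB]]], rule cong2)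
       (simp add: ubN_eq ubL_eq algebra_simps)
qed

lemma IH_step:
  assumes IH: "IH t" and t1: "1 \<le> t" and tT: "Suc t \<le> T"
  shows "IH (Suc t)"
proof -
  have t: "t \<in> {1..T}" using t1 tT by auto
  note M = MBs[OF t] and C = convs[OF t] and D = IH_derived[OF IH t]
  note A = MA[of t]
  have zB: "Bnd (\<lambda>n i \<omega>. zz n (Suc t))"
    by (rule Bnd_cong[OF Bnd_add[OF Bnd_add[OF Bnd_add[OF Bnd_matM[OF A(1) D(6)] Bnd_matM[OF A(3) D(6)]]
           Bnd_matM[OF A(2) Bnd_matM[OF M(4) D(6)]]] Bnd_matM[OF A(4) Bnd_matM[OF M(4) D(6)]]]], rule cong2)
       (rule zz_Suc[OF t1])
  have XNB: "Bnd (\<lambda>n i \<omega>. XN n (Suc t) i \<omega>)"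
    by (rule Bnd_cong[OF Bnd_add[OF Bnd_add[OF Bnd_add[OF Bnd_add[OF Bnd_matM[OF A(1) D(1)] Bnd_matM[OF A(2) D(10)]]
           Bnd_matM[OF A(3) D(7)]] Bnd_matM[OF A(4) D(12)]] w_bnd[OF t]]], rule cong2)
       (rule XN_Suc[OF _ t1], assumption)
  have DV: "Van (\<lambda>n i \<omega>. XN n (Suc t) i \<omega> - XL n (Suc t) i \<omega>)"
    by (rule Van_cong[OF Van_add[OF Van_add[OF Van_add[OF Van_matM[OF A(1) D(3)] Van_matM[OF A(2) D(14)]]
           Van_matM[OF A(3) D(9)]] Van_matM[OF A(4) D(15)]]], rule cong2)
       (subst XN_Suc[OF _ t1], assumption, subst XL_Suc[OF _ t1], assumption, simp add: algebra_simps)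
  have eV: "Van (\<lambda>n i \<omega>. xN n (Suc t) \<omega> - zz n (Suc t))"
    by (rule Van_cong[OF Van_add[OF Van_add[OF Van_add[OF Van_add[OF Van_matM[OF A(1) D(4)] Van_matM[OF A(2) Van_matM[OF M(3) D(4)]]]
           Van_matM[OF A(3) D(4)]] Van_matM[OF A(4) Van_matM[OF M(3) D(4)]]] wbV[OF t]]], rule cong2)
       (use t1 in \<open>simp add: xN_Suc zz_Suc ubN_eq algebra_simps\<close>)
  have fV: "Van (\<lambda>n i \<omega>. xL n (Suc t) \<omega> - zz n (Suc t))"
    by (rule Van_cong[OF Van_add[OF Van_add[OF Van_add[OF Van_add[OF Van_add[OF Van_add[OF Van_matM[OF A(1) D(5)] Van_matM[OF A(2) Van_matM[OF M(2) D(5)]]]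
           Van_matM[OF A(3) D(5)]] Van_matM[OF A(4) Van_matM[OF M(2) D(5)]]]
           Van_matM[OF A(2) Van_mat0[OF C(3) D(6)]]] Van_matM[OF A(4) Van_mat0[OF C(3) D(6)]]] wbV[OF t]]], rule cong2)
       (use t1 in \<open>simp add: xL_Suc zz_Suc ubL_eq algebra_simps\<close>)
  show ?thesis unfolding IH_def using zB XNB DV eV fV by auto
qed

lemma IH_all: "t \<in> {1..T} \<Longrightarrow> IH t"
proof -
  assume t: "t \<in> {1..T}"
  then have "1 \<le> t" by auto
  then show "IH t" using t
  proof (induction t rule: dec_induct)
    case base then show ?case using IH_1 by simp
  next
    case (step k) then show ?case using IH_step by auto
  qed
qed

lemma SV_stage:
  assumes t: "t \<in> {1..T}"
  shows "SV (\<lambda>n i \<omega>. stage_cost m n (\<alpha> n) t i (\<lambda>j. XN n t j \<omega>) (\<lambda>j. uN n t j \<omega>)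
                    - stage_cost m n (\<alpha> n) t i (\<lambda>j. XL n t j \<omega>) (\<lambda>j. uL n t j \<omega>))"
proof -
  note D = IH_derived[OF IH_all[OF t] t]
  have s1: "SV (\<lambda>n i \<omega>. XN n t i \<omega> \<bullet> (mQ m t *v XN n t i \<omega>) - XL n t i \<omega> \<bullet> (mQ m t *v XL n t i \<omega>))"
    by (rule SV_bil[OF D(1) D(1) D(2) D(2) D(3) D(3)])
  have s2: "SV (\<lambda>n i \<omega>. 2 * (XN n t i \<omega> \<bullet> (mSx m t *v xN n t \<omega>) - XL n t i \<omega> \<bullet> (mSx m t *v xL n t \<omega>)))"
    by (rule SV_cmult[OF SV_bil[OF D(1) D(7) D(2) D(8) D(3) D(9)]])
  have s3: "SV (\<lambda>n i \<omega>. xN n t \<omega> \<bullet> (mQb m t *v xN n t \<omega>) - xL n t \<omega> \<bullet> (mQb m t *v xL n t \<omega>))"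
    by (rule SV_bil[OF D(7) D(7) D(8) D(8) D(9) D(9)])
  have s4: "SV (\<lambda>n i \<omega>. uN n t i \<omega> \<bullet> (mR m t *v uN n t i \<omega>) - uL n t i \<omega> \<bullet> (mR m t *v uL n t i \<omega>))"
    by (rule SV_bil[OF D(10) D(10) D(11) D(11) D(14) D(14)])
  have s5: "SV (\<lambda>n i \<omega>. 2 * (uN n t i \<omega> \<bullet> (mSu m t *v ubN n t \<omega>) - uL n t i \<omega> \<bullet> (mSu m t *v ubL n t \<omega>)))"
    by (rule SV_cmult[OF SV_bil[OF D(10) D(12) D(11) D(13) D(14) D(15)]])
  have s6: "SV (\<lambda>n i \<omega>. ubN n t \<omega> \<bullet> (mRb m t *v ubN n t \<omega>) - ubL n t \<omega> \<bullet> (mRb m t *v ubL n t \<omega>))"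
    by (rule SV_bil[OF D(12) D(12) D(13) D(13) D(15) D(15)])
  have s7: "SV (\<lambda>n i \<omega>. \<Sum>j\<in>{1..n}. \<alpha> n j * ((XN n t j \<omega> \<bullet> (mGx m t *v XN n t j \<omega>) - XL n t j \<omega> \<bullet> (mGx m t *v XL n t j \<omega>))
        + (uN n t j \<omega> \<bullet> (mGu m t *v uN n t j \<omega>) - uL n t j \<omega> \<bullet> (mGu m t *v uL n t j \<omega>))))"
    by (rule SV_wsum[OF SV_add[OF SV_bil[OF D(1) D(1) D(2) D(2) D(3) D(3)] SV_bil[OF D(10) D(10) D(11) D(11) D(14) D(14)]] abs_bound])
  show ?thesis
    by (rule SV_cong[OF SV_add[OF SV_add[OF SV_add[OF SV_add[OF SV_add[OF SV_add[OF s1 s2] s3] s4] s5] s6] s7]],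
        intro exI[of _ 0] allI impI ballI)
       (simp only: sc_diff xN_def[symmetric] xL_def[symmetric] ubN_def[symmetric] ubL_def[symmetric])
qed

lemma rcostN: "rcost m T n (\<alpha> n) (x1 n) (w n) (gN n) t0 i \<omega> =
   (\<Sum>t\<in>{t0..T}. stage_cost m n (\<alpha> n) t i (\<lambda>j. XN n t j \<omega>) (\<lambda>j. uN n t j \<omega>))"
  unfolding rcost_st[OF loc_ns[of "th n" "thb n" "zz n", folded gN_def]]
  by (simp add: XN_def uN_def gN_def noshare_profile_def)

lemma rcostL: "rcost m T n (\<alpha> n) (x1 n) (w n) (gL n) t0 i \<omega> =
   (\<Sum>t\<in>{t0..T}. stage_cost m n (\<alpha> n) t i (\<lambda>j. XL n t j \<omega>) (\<lambda>j. uL n t j \<omega>))"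
  unfolding rcost_st[OF loc_lin[of n "\<alpha> n" "\<theta> n" "\<theta>b n", folded gL_def]]
  by (simp add: XL_def uL_def gL_def lin_profile_def xL_def)

lemma SV_rcost:
  assumes t0: "t0 \<in> {1..T}"
  shows "SV (\<lambda>n i \<omega>. rcost m T n (\<alpha> n) (x1 n) (w n) (gN n) t0 i \<omega> - rcost m T n (\<alpha> n) (x1 n) (w n) (gL n) t0 i \<omega>)"
proof -
  have "SV (\<lambda>n i \<omega>. \<Sum>t\<in>{t0..T}. stage_cost m n (\<alpha> n) t i (\<lambda>j. XN n t j \<omega>) (\<lambda>j. uN n t j \<omega>)
                    - stage_cost m n (\<alpha> n) t i (\<lambda>j. XL n t j \<omega>) (\<lambda>j. uL n t j \<omega>))"
    using t0 by (intro SV_sum[where f="\<lambda>t n i \<omega>. stage_cost m n (\<alpha> n) t i (\<lambda>j. XN n t j \<omega>) (\<lambda>j. uN n t j \<omega>)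
                    - stage_cost m n (\<alpha> n) t i (\<lambda>j. XL n t j \<omega>) (\<lambda>j. uL n t j \<omega>)", simplified]) (auto intro!: SV_stage)
  then show ?thesis
    by (rule SV_cong, intro exI[of _ 0] allI impI ballI) (simp add: rcostN rcostL sum_subtractf)
qed

theorem gap_conv:
  assumes t0: "t0 \<in> {1..T}"
  shows "(\<lambda>n. gapJ m T n (\<alpha> n) (M n) (x1 n) (w n) (gN n) (gL n) t0) \<longlonglongrightarrow> 0"
proof -
  obtain W N where WN: "2 \<le> N" "W \<longlonglongrightarrow> 0" "\<forall>n\<ge>N. \<forall>i\<in>{1..n}.
      integrable (M n) (\<lambda>\<omega>. rcost m T n (\<alpha> n) (x1 n) (w n) (gN n) t0 i \<omega> - rcost m T n (\<alpha> n) (x1 n) (w n) (gL n) t0 i \<omega>)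
      \<and> (\<integral>\<omega>. \<bar>rcost m T n (\<alpha> n) (x1 n) (w n) (gN n) t0 i \<omega> - rcost m T n (\<alpha> n) (x1 n) (w n) (gL n) t0 i \<omega>\<bar> \<partial>M n) \<le> W n"
    using SV_rcost[OF t0] unfolding SV_def by blast
  obtain N' where N': "\<forall>n\<ge>N'. \<forall>t0\<in>{1..T}. \<forall>i\<in>{1..n}.
        integrable (M n) (rcost m T n (\<alpha> n) (x1 n) (w n) (gL n) t0 i)"
    using lin_int unfolding gL_def by blast
  have bound: "0 \<le> gapJ m T n (\<alpha> n) (M n) (x1 n) (w n) (gN n) (gL n) t0 \<and>
               gapJ m T n (\<alpha> n) (M n) (x1 n) (w n) (gN n) (gL n) t0 \<le> W n" if n: "max N N' \<le> n" for n
  proof -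
    define rN where "rN i = rcost m T n (\<alpha> n) (x1 n) (w n) (gN n) t0 i" for i
    define rL where "rL i = rcost m T n (\<alpha> n) (x1 n) (w n) (gL n) t0 i" for i
    have each: "\<bar>Jcost m T n (\<alpha> n) (M n) (x1 n) (w n) (gN n) t0 i - Jcost m T n (\<alpha> n) (M n) (x1 n) (w n) (gL n) t0 i\<bar> \<le> W n"
      if i: "i \<in> {1..n}" for i
    proof -
      have di: "integrable (M n) (\<lambda>\<omega>. rN i \<omega> - rL i \<omega>)" and db: "(\<integral>\<omega>. \<bar>rN i \<omega> - rL i \<omega>\<bar> \<partial>M n) \<le> W n"
        using WN(3) n i unfolding rN_def rL_def by auto
      have li: "integrable (M n) (rL i)" using N' n i t0 unfolding rL_def by auto
      have ni: "integrable (M n) (rN i)"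
      proof -
        have "integrable (M n) (\<lambda>\<omega>. (rN i \<omega> - rL i \<omega>) + rL i \<omega>)" using di li by (rule Bochner_Integration.integrable_add)
        then show ?thesis by simp
      qed
      have "Jcost m T n (\<alpha> n) (M n) (x1 n) (w n) (gN n) t0 i - Jcost m T n (\<alpha> n) (M n) (x1 n) (w n) (gL n) t0 i
            = (\<integral>\<omega>. rN i \<omega> - rL i \<omega> \<partial>M n)"
        unfolding Jcost_def rN_def[symmetric] rL_def[symmetric] using ni li by (simp add: Bochner_Integration.integral_diff)
      also have "\<bar>\<dots>\<bar> \<le> (\<integral>\<omega>. \<bar>rN i \<omega> - rL i \<omega>\<bar> \<partial>M n)" by (rule integral_abs_bound)
      finally show ?thesis using db by linarith
    qed
    have ne: "{1..n} \<noteq> {}" using n WN(1) by auto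
    have "gapJ m T n (\<alpha> n) (M n) (x1 n) (w n) (gN n) (gL n) t0 \<le> W n"
      unfolding gapJ_def using each ne by (subst Max_le_iff) auto
    moreover have "0 \<le> gapJ m T n (\<alpha> n) (M n) (x1 n) (w n) (gN n) (gL n) t0"
    proof -
      have "1 \<in> {1..n}" using n WN(1) by auto
      then show ?thesis unfolding gapJ_def
        by (meson Max_ge abs_ge_zero finite_atLeastAtMost finite_imageI imageI order_trans)
    qed
    ultimately show ?thesis by simp
  qed
  show ?thesis
  proof (rule Lim_null_comparison[OF _ WN(2)])
    show "\<forall>\<^sub>F n in sequentially. norm (gapJ m T n (\<alpha> n) (M n) (x1 n) (w n) (gN n) (gL n) t0) \<le> W n"
      unfolding eventually_sequentially using bound by (intro exI[of _ "max N N'"]) auto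
  qed
qed

end

lemma wsq_bound:
  fixes a v :: "nat \<Rightarrow> real"
  assumes a: "\<And>j. j \<in> {1..n} \<Longrightarrow> \<bar>a j\<bar> \<le> g / real n" and v: "\<And>j. j \<in> {1..n} \<Longrightarrow> 0 \<le> v j \<and> v j \<le> C"
    and n: "1 \<le> n"
  shows "(\<Sum>j\<in>{1..n}. (a j)\<^sup>2 * v j) \<le> g\<^sup>2 * C / real n"
proof -
  have "(\<Sum>j\<in>{1..n}. (a j)\<^sup>2 * v j) \<le> (\<Sum>j\<in>{1..n}. (g / real n)\<^sup>2 * C)"
  proof (rule sum_mono)
    fix j assume j: "j \<in> {1..n}"
    have "(a j)\<^sup>2 = \<bar>a j\<bar>\<^sup>2" by simp
    also have "\<dots> \<le> (g / real n)\<^sup>2" using a[OF j] by (intro power_mono) auto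
    finally have "(a j)\<^sup>2 \<le> (g / real n)\<^sup>2" .
    then show "(a j)\<^sup>2 * v j \<le> (g / real n)\<^sup>2 * C" using v[OF j] by (intro mult_mono) auto
  qed
  also have "\<dots> = real n * (g / real n)\<^sup>2 * C" by simp
  also have "\<dots> = g\<^sup>2 * C / real n" using n by (simp add: power2_eq_square field_simps)
  finally show ?thesis .
qed

lemma meas_comp1: "(\<lambda>v::real^'d. (v - c) $ k) \<in> borel_measurable borel"
  by (simp add: vector_minus_component) measurable

lemma meas_comp2: "(\<lambda>v::real^'d. v $ k) \<in> borel_measurable borel" by measurable

theorem lemma1:
  fixes m :: "('x::finite, 'u::finite) lqm" and T :: nat
    and \<alpha> :: "nat \<Rightarrow> nat \<Rightarrow> real"
    and M :: "nat \<Rightarrow> 'w measure"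
    and x1 :: "nat \<Rightarrow> nat \<Rightarrow> 'w \<Rightarrow> real^'x"
    and w :: "nat \<Rightarrow> nat \<Rightarrow> nat \<Rightarrow> 'w \<Rightarrow> real^'x"
    and \<mu>x :: "real^'x"
    and \<theta> \<theta>b :: "nat \<Rightarrow> nat \<Rightarrow> real^'x^'u"
    and \<theta>inf \<theta>binf :: "nat \<Rightarrow> real^'x^'u"
  assumes T: "T \<ge> 1"
    and sym: "\<forall>t\<in>{1..T}. transpose (mQ m t) = mQ m t \<and> transpose (mSx m t) = mSx m t
               \<and> transpose (mQb m t) = mQb m t \<and> transpose (mR m t) = mR m t
               \<and> transpose (mSu m t) = mSu m t \<and> transpose (mRb m t) = mRb m t
               \<and> transpose (mGx m t) = mGx m t \<and> transpose (mGu m t) = mGu m t"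
    and prob: "\<forall>n\<ge>2. prob_space (M n)"
    and wsum: "\<forall>n\<ge>2. (\<Sum>i\<in>{1..n}. \<alpha> n i) = 1"
    and vanish: "\<exists>n0 \<gamma>max. \<gamma>max > 0 \<and>
                   (\<forall>n>n0. \<forall>i\<in>{1..n}. \<exists>\<gamma>. \<alpha> n i = \<gamma> / real n \<and> \<bar>\<gamma>\<bar> \<le> \<gamma>max)"
    and indep: "\<forall>n\<ge>2. prob_space.indep_vars (M n) (\<lambda>_. borel) (prim_rv (x1 n) (w n)) ({0..T} \<times> {1..n})"
    and mean_x: "\<forall>n\<ge>2. \<forall>i\<in>{1..n}. integrable (M n) (x1 n i) \<and> (\<integral>\<omega>. x1 n i \<omega> \<partial>M n) = \<mu>x"
    and mean_w: "\<forall>n\<ge>2. \<forall>t\<in>{1..T}. \<forall>i\<in>{1..n}.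
                   integrable (M n) (w n t i) \<and> (\<integral>\<omega>. w n t i \<omega> \<partial>M n) = 0"
    and var: "\<exists>C. \<forall>n\<ge>2. \<forall>i\<in>{1..n}.
                integrable (M n) (\<lambda>\<omega>. (norm (x1 n i \<omega> - \<mu>x))\<^sup>2)
              \<and> (\<integral>\<omega>. (norm (x1 n i \<omega> - \<mu>x))\<^sup>2 \<partial>M n) \<le> C
              \<and> (\<forall>t\<in>{1..T}. integrable (M n) (\<lambda>\<omega>. (norm (w n t i \<omega>))\<^sup>2)
                             \<and> (\<integral>\<omega>. (norm (w n t i \<omega>))\<^sup>2 \<partial>M n) \<le> C)"
    and A7: "\<exists>n0. (\<forall>n\<ge>n0. n \<ge> 2 \<longrightarrow>
                  is_SPNE m T n (\<alpha> n) (M n) (x1 n) (w n) (lin_profile n (\<alpha> n) (\<theta> n) (\<theta>b n)))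
              \<and> (\<exists>K. \<forall>n\<ge>n0. \<forall>t\<in>{1..T}. norm (\<theta> n t) \<le> K \<and> norm (\<theta>b n t) \<le> K)
              \<and> (\<forall>t\<in>{1..T}. (\<lambda>n. \<theta> n t) \<longlonglongrightarrow> \<theta>inf t \<and> (\<lambda>n. \<theta>b n t) \<longlonglongrightarrow> \<theta>binf t)"
  shows "\<forall>t0\<in>{1..T}.
           (\<lambda>n. gapJ m T n (\<alpha> n) (M n) (x1 n) (w n)
                  (noshare_profile (\<theta> n) (\<theta>b n)
                     (zpred m (\<theta>b n) (init_mean n (\<alpha> n) (M n) (x1 n))))
                  (lin_profile n (\<alpha> n) (\<theta> n) (\<theta>b n)) t0) \<longlonglongrightarrow> 0
         \<and> (\<lambda>n. gapJ m T n (\<alpha> n) (M n) (x1 n) (w n)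
                  (noshare_profile \<theta>inf \<theta>binf
                     (zpred m \<theta>binf (init_mean n (\<alpha> n) (M n) (x1 n))))
                  (lin_profile n (\<alpha> n) (\<theta> n) (\<theta>b n)) t0) \<longlonglongrightarrow> 0"
proof -
  have famM: "fam M" by (rule fam.intro) (use prob in auto)
  interpret fam M by (rule famM)
  obtain n0 \<gamma>m where \<gamma>pos: "\<gamma>m > 0" and \<gamma>: "\<forall>n>n0. \<forall>i\<in>{1..n}. \<exists>\<gamma>. \<alpha> n i = \<gamma> / real n \<and> \<bar>\<gamma>\<bar> \<le> \<gamma>m"
    using vanish by blast
  have aabs: "\<bar>\<alpha> n i\<bar> \<le> \<gamma>m / real n" if nn: "n > n0" "i \<in> {1..n}" for n i
  proof -
    have "\<exists>g. \<alpha> n i = g / real n \<and> \<bar>g\<bar> \<le> \<gamma>m" using \<gamma> nn by blast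
    then obtain g where g: "\<alpha> n i = g / real n" "\<bar>g\<bar> \<le> \<gamma>m" by blast
    show ?thesis unfolding g(1) using g(2) by (simp add: abs_divide divide_right_mono)
  qed
  have abs_bound: "\<exists>G N. \<forall>n\<ge>N. (\<Sum>j\<in>{1..n}. \<bar>\<alpha> n j\<bar>) \<le> G"
  proof (intro exI[of _ \<gamma>m] exI[of _ "Suc n0"] allI impI)
    fix n assume n: "Suc n0 \<le> n"
    have "(\<Sum>j\<in>{1..n}. \<bar>\<alpha> n j\<bar>) \<le> (\<Sum>j\<in>{1..n}. \<gamma>m / real n)"
    proof (rule sum_mono)
      fix j assume j: "j \<in> {1..n}"
      have "n0 < n" using n by simp
      then show "\<bar>\<alpha> n j\<bar> \<le> \<gamma>m / real n" using aabs j by blast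
    qed
    also have "\<dots> = real n * (\<gamma>m / real n)" by simp
    also have "\<dots> = \<gamma>m" using n by simp
    finally show "(\<Sum>j\<in>{1..n}. \<bar>\<alpha> n j\<bar>) \<le> \<gamma>m" .
  qed
  obtain C where C: "\<forall>n\<ge>2. \<forall>i\<in>{1..n}.
                integrable (M n) (\<lambda>\<omega>. (norm (x1 n i \<omega> - \<mu>x))\<^sup>2)
              \<and> (\<integral>\<omega>. (norm (x1 n i \<omega> - \<mu>x))\<^sup>2 \<partial>M n) \<le> C
              \<and> (\<forall>t\<in>{1..T}. integrable (M n) (\<lambda>\<omega>. (norm (w n t i \<omega>))\<^sup>2)
                             \<and> (\<integral>\<omega>. (norm (w n t i \<omega>))\<^sup>2 \<partial>M n) \<le> C)"
    using var by blast
  have rv: "prim_rv (x1 n) (w n) (t, j) \<in> borel_measurable (M n)" if "2 \<le> n" "t \<in> {0..T}" "j \<in> {1..n}" for n t j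
  proof -
    interpret P: prob_space "M n" using prob that by auto
    have iv: "P.indep_vars (\<lambda>_. borel) (prim_rv (x1 n) (w n)) ({0..T} \<times> {1..n})"
      using indep that(1) by blast
    show ?thesis using iv that(2,3) unfolding P.indep_vars_def by blast
  qed
  have x1m: "x1 n j \<in> borel_measurable (M n)" if "2 \<le> n" "j \<in> {1..n}" for n j
    using rv[of n 0 j] that by (simp add: prim_rv_def)
  have wm: "w n t j \<in> borel_measurable (M n)" if "2 \<le> n" "t \<in> {1..T}" "j \<in> {1..n}" for n t j
    using rv[of n t j] that by (simp add: prim_rv_def)
  have lln_x: "Van (\<lambda>n i \<omega>. wavg n (\<alpha> n) (\<lambda>j. x1 n j \<omega>) - \<mu>x)"
    unfolding Van_def
  proof (intro exI[of _ "\<lambda>n. \<gamma>m\<^sup>2 * \<bar>C\<bar> / real n"] exI[of _ "max 2 (Suc n0)"] conjI allI impI ballI)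
    show "(\<lambda>n. \<gamma>m\<^sup>2 * \<bar>C\<bar> / real n) \<longlonglongrightarrow> 0" by (rule lim_const_over_n)
    fix n i assume n: "max 2 (Suc n0) \<le> n" and i: "i \<in> {1..n}"
    have n2: "2 \<le> n" using n by auto
    interpret P: prob_space "M n" using prob n2 by auto
    define Z where "Z j \<omega> = x1 n j \<omega> - \<mu>x" for j \<omega>
    have eq: "wavg n (\<alpha> n) (\<lambda>j. x1 n j \<omega>) - \<mu>x = (\<Sum>j\<in>{1..n}. \<alpha> n j *\<^sub>R Z j \<omega>)" for \<omega>
      using wsum n2 by (simp add: Z_def wavg_def scaleR_diff_right sum_subtractf scaleR_sum_left[symmetric])
    have Zm: "Z j \<in> borel_measurable (M n)" if "j \<in> {1..n}" for j
      unfolding Z_def using x1m[OF n2 that] by measurable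
    have Zsq: "integrable (M n) (\<lambda>\<omega>. (norm (Z j \<omega>))\<^sup>2)" and Zb: "(\<integral>\<omega>. (norm (Z j \<omega>))\<^sup>2 \<partial>M n) \<le> C"
      if "j \<in> {1..n}" for j using C n2 that unfolding Z_def by auto
    have Zi: "integrable (M n) (Z j)" and Z0: "(\<integral>\<omega>. Z j \<omega> \<partial>M n) = 0" if "j \<in> {1..n}" for j
      using mean_x n2 that unfolding Z_def by (auto simp: prob_space.prob_space[OF prob[OF n2]])
    have Zind: "P.indep_var borel (\<lambda>\<omega>. Z j \<omega> $ c) borel (\<lambda>\<omega>. Z k \<omega> $ c)"
      if "j \<in> {1..n}" "k \<in> {1..n}" "j \<noteq> k" for j k c
      using indep_pair[OF prob[OF n2] indep[rule_format, OF n2], of "(0,j)" "(0,k)" "\<lambda>v. (v - \<mu>x) $ c" "\<lambda>v. (v - \<mu>x) $ c"]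
        that meas_comp1 by (simp add: Z_def prim_rv_def)
    note L = lln[OF prob[OF n2] finite_atLeastAtMost Zm Zsq Zi Z0 Zind, where a="\<alpha> n"]
    show "(\<lambda>\<omega>. wavg n (\<alpha> n) (\<lambda>j. x1 n j \<omega>) - \<mu>x) \<in> borel_measurable (M n)"
      unfolding eq using Zm by (intro borel_measurable_sum borel_measurable_scaleR) auto
    show "integrable (M n) (\<lambda>\<omega>. (norm (wavg n (\<alpha> n) (\<lambda>j. x1 n j \<omega>) - \<mu>x))\<^sup>2)"
      unfolding eq by (rule L(1))
    have "(\<integral>\<omega>. (norm (wavg n (\<alpha> n) (\<lambda>j. x1 n j \<omega>) - \<mu>x))\<^sup>2 \<partial>M n) = (\<Sum>j\<in>{1..n}. (\<alpha> n j)\<^sup>2 * (\<integral>\<omega>. (norm (Z j \<omega>))\<^sup>2 \<partial>M n))"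
      unfolding eq by (rule L(2))
    also have "\<dots> \<le> \<gamma>m\<^sup>2 * \<bar>C\<bar> / real n"
    proof (rule wsq_bound)
      fix j assume j: "j \<in> {1..n}"
      have "(\<integral>\<omega>. (norm (Z j \<omega>))\<^sup>2 \<partial>M n) \<le> C" by (rule Zb[OF j])
      moreover have "0 \<le> (\<integral>\<omega>. (norm (Z j \<omega>))\<^sup>2 \<partial>M n)" by simp
      ultimately show "0 \<le> (\<integral>\<omega>. (norm (Z j \<omega>))\<^sup>2 \<partial>M n) \<and> (\<integral>\<omega>. (norm (Z j \<omega>))\<^sup>2 \<partial>M n) \<le> \<bar>C\<bar>" by linarith
      have "n0 < n" using n by simp
      then show "\<bar>\<alpha> n j\<bar> \<le> \<gamma>m / real n" using aabs j by blast
    qed (use n in simp)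
    finally show "(\<integral>\<omega>. (norm (wavg n (\<alpha> n) (\<lambda>j. x1 n j \<omega>) - \<mu>x))\<^sup>2 \<partial>M n) \<le> \<gamma>m\<^sup>2 * \<bar>C\<bar> / real n" .
  qed auto
  have lln_w: "Van (\<lambda>n i \<omega>. wavg n (\<alpha> n) (\<lambda>j. w n t j \<omega>))" if t: "t \<in> {1..T}" for t
    unfolding Van_def
  proof (intro exI[of _ "\<lambda>n. \<gamma>m\<^sup>2 * \<bar>C\<bar> / real n"] exI[of _ "max 2 (Suc n0)"] conjI allI impI ballI)
    show "(\<lambda>n. \<gamma>m\<^sup>2 * \<bar>C\<bar> / real n) \<longlonglongrightarrow> 0" by (rule lim_const_over_n)
    fix n i assume n: "max 2 (Suc n0) \<le> n" and i: "i \<in> {1..n}"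
    have n2: "2 \<le> n" using n by auto
    interpret P: prob_space "M n" using prob n2 by auto
    define Z where "Z j \<omega> = w n t j \<omega>" for j \<omega>
    have eq: "wavg n (\<alpha> n) (\<lambda>j. w n t j \<omega>) = (\<Sum>j\<in>{1..n}. \<alpha> n j *\<^sub>R Z j \<omega>)" for \<omega>
      by (simp add: Z_def wavg_def)
    have Zm: "Z j \<in> borel_measurable (M n)" if "j \<in> {1..n}" for j
      unfolding Z_def using wm[OF n2 t that] .
    have Zsq: "integrable (M n) (\<lambda>\<omega>. (norm (Z j \<omega>))\<^sup>2)" and Zb: "(\<integral>\<omega>. (norm (Z j \<omega>))\<^sup>2 \<partial>M n) \<le> C"
      if "j \<in> {1..n}" for j using C n2 that t unfolding Z_def by auto
    have Zi: "integrable (M n) (Z j)" and Z0: "(\<integral>\<omega>. Z j \<omega> \<partial>M n) = 0" if "j \<in> {1..n}" for j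
      using mean_w n2 that t unfolding Z_def by auto
    have Zind: "P.indep_var borel (\<lambda>\<omega>. Z j \<omega> $ c) borel (\<lambda>\<omega>. Z k \<omega> $ c)"
      if "j \<in> {1..n}" "k \<in> {1..n}" "j \<noteq> k" for j k c
      using indep_pair[OF prob[OF n2] indep[rule_format, OF n2], of "(t,j)" "(t,k)" "\<lambda>v. v $ c" "\<lambda>v. v $ c"]
        that t meas_comp2 by (simp add: Z_def prim_rv_def)
    note L = lln[OF prob[OF n2] finite_atLeastAtMost Zm Zsq Zi Z0 Zind, where a="\<alpha> n"]
    show "(\<lambda>\<omega>. wavg n (\<alpha> n) (\<lambda>j. w n t j \<omega>)) \<in> borel_measurable (M n)"
      unfolding eq using Zm by (intro borel_measurable_sum borel_measurable_scaleR) auto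
    show "integrable (M n) (\<lambda>\<omega>. (norm (wavg n (\<alpha> n) (\<lambda>j. w n t j \<omega>)))\<^sup>2)"
      unfolding eq by (rule L(1))
    have "(\<integral>\<omega>. (norm (wavg n (\<alpha> n) (\<lambda>j. w n t j \<omega>)))\<^sup>2 \<partial>M n) = (\<Sum>j\<in>{1..n}. (\<alpha> n j)\<^sup>2 * (\<integral>\<omega>. (norm (Z j \<omega>))\<^sup>2 \<partial>M n))"
      unfolding eq by (rule L(2))
    also have "\<dots> \<le> \<gamma>m\<^sup>2 * \<bar>C\<bar> / real n"
    proof (rule wsq_bound)
      fix j assume j: "j \<in> {1..n}"
      have "(\<integral>\<omega>. (norm (Z j \<omega>))\<^sup>2 \<partial>M n) \<le> C" by (rule Zb[OF j])
      moreover have "0 \<le> (\<integral>\<omega>. (norm (Z j \<omega>))\<^sup>2 \<partial>M n)" by simp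
      ultimately show "0 \<le> (\<integral>\<omega>. (norm (Z j \<omega>))\<^sup>2 \<partial>M n) \<and> (\<integral>\<omega>. (norm (Z j \<omega>))\<^sup>2 \<partial>M n) \<le> \<bar>C\<bar>" by linarith
      have "n0 < n" using n by simp
      then show "\<bar>\<alpha> n j\<bar> \<le> \<gamma>m / real n" using aabs j by blast
    qed (use n in simp)
    finally show "(\<integral>\<omega>. (norm (wavg n (\<alpha> n) (\<lambda>j. w n t j \<omega>)))\<^sup>2 \<partial>M n) \<le> \<gamma>m\<^sup>2 * \<bar>C\<bar> / real n" .
  qed auto
  have x1c: "Bnd (\<lambda>n i \<omega>. x1 n i \<omega> - \<mu>x)"
    unfolding Bnd_def
  proof (intro exI[of _ C] exI[of _ 2] conjI allI impI ballI)
    fix n i assume n: "2 \<le> (n::nat)" and i: "i \<in> {1..n}"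
    show "(\<lambda>\<omega>. x1 n i \<omega> - \<mu>x) \<in> borel_measurable (M n)" using x1m[OF n i] by measurable
  qed (use C in auto)
  have x1_bnd: "Bnd (\<lambda>n i \<omega>. x1 n i \<omega>)"
    by (rule Bnd_cong[OF Bnd_add[OF x1c Bnd_const[of "\<lambda>n. \<mu>x"]]], blast, rule exI[of _ 0]) simp
  have w_bnd: "Bnd (\<lambda>n i \<omega>. w n t i \<omega>)" if t: "t \<in> {1..T}" for t
    unfolding Bnd_def
  proof (intro exI[of _ C] exI[of _ 2] conjI allI impI ballI)
    fix n i assume n: "2 \<le> (n::nat)" and i: "i \<in> {1..n}"
    show "w n t i \<in> borel_measurable (M n)" using wm[OF n t i] .
  qed (use C t in auto)
  have init: "init_mean n (\<alpha> n) (M n) (x1 n) = \<mu>x" if n: "2 \<le> n" for n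
  proof -
    have "init_mean n (\<alpha> n) (M n) (x1 n) = wavg n (\<alpha> n) (\<lambda>i. \<mu>x)"
      unfolding init_mean_def using mean_x n by (intro wavg_cong) auto
    also have "\<dots> = \<mu>x" using wsum n by (intro wavg_const) auto
    finally show ?thesis .
  qed
  have wsum': "\<And>n. 2 \<le> n \<Longrightarrow> (\<Sum>i\<in>{1..n}. \<alpha> n i) = 1" using wsum by auto
  obtain n1 K where SP: "\<forall>n\<ge>n1. n \<ge> 2 \<longrightarrow>
                  is_SPNE m T n (\<alpha> n) (M n) (x1 n) (w n) (lin_profile n (\<alpha> n) (\<theta> n) (\<theta>b n))"
    and KB: "\<forall>n\<ge>n1. \<forall>t\<in>{1..T}. norm (\<theta> n t) \<le> K \<and> norm (\<theta>b n t) \<le> K"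
    and CV: "\<forall>t\<in>{1..T}. (\<lambda>n. \<theta> n t) \<longlonglongrightarrow> \<theta>inf t \<and> (\<lambda>n. \<theta>b n t) \<longlonglongrightarrow> \<theta>binf t"
    using A7 by blast
  have lin_int: "\<exists>N. \<forall>n\<ge>N. \<forall>t0\<in>{1..T}. \<forall>i\<in>{1..n}.
        integrable (M n) (rcost m T n (\<alpha> n) (x1 n) (w n) (lin_profile n (\<alpha> n) (\<theta> n) (\<theta>b n)) t0 i)"
    using SP unfolding is_SPNE_def by (intro exI[of _ "max n1 2"]) auto
  have MBt: "MB (\<lambda>n. \<theta> n t)" "MB (\<lambda>n. \<theta>b n t)" if "t \<in> {1..T}" for t
    unfolding MB_def using KB that by blast+
  have L1: "lqs M m T \<alpha> x1 w \<mu>x \<theta> \<theta>b \<theta> \<theta>b"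
    apply (intro lqs.intro lqs_axioms.intro famM wsum' abs_bound lln_x lln_w x1_bnd w_bnd init lin_int)
    apply assumption+
    using MBt apply blast
    apply simp
    done
  have L2: "lqs M m T \<alpha> x1 w \<mu>x \<theta> \<theta>b (\<lambda>n. \<theta>inf) (\<lambda>n. \<theta>binf)"
    apply (intro lqs.intro lqs_axioms.intro famM wsum' abs_bound lln_x lln_w x1_bnd w_bnd init lin_int)
    apply assumption+
    using MBt MB_const apply blast
  proof -
    fix t assume t: "t \<in> {1..T}"
    have c: "(\<lambda>n. \<theta> n t) \<longlonglongrightarrow> \<theta>inf t" "(\<lambda>n. \<theta>b n t) \<longlonglongrightarrow> \<theta>binf t" using CV t by auto
    have "(\<lambda>n. \<theta>inf t - \<theta> n t) \<longlonglongrightarrow> \<theta>inf t - \<theta>inf t" by (intro tendsto_diff tendsto_const c(1))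
    moreover have "(\<lambda>n. \<theta>binf t - \<theta>b n t) \<longlonglongrightarrow> \<theta>binf t - \<theta>binf t" by (intro tendsto_diff tendsto_const c(2))
    ultimately show "(\<lambda>n. \<theta>inf t - \<theta> n t) \<longlonglongrightarrow> 0 \<and> (\<lambda>n. \<theta>binf t - \<theta>b n t) \<longlonglongrightarrow> 0" by simp
  qed
  show ?thesis
  proof
    fix t0 assume t0: "t0 \<in> {1..T}"
    show "(\<lambda>n. gapJ m T n (\<alpha> n) (M n) (x1 n) (w n)
                  (noshare_profile (\<theta> n) (\<theta>b n)
                     (zpred m (\<theta>b n) (init_mean n (\<alpha> n) (M n) (x1 n))))
                  (lin_profile n (\<alpha> n) (\<theta> n) (\<theta>b n)) t0) \<longlonglongrightarrow> 0
         \<and> (\<lambda>n. gapJ m T n (\<alpha> n) (M n) (x1 n) (w n)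
                  (noshare_profile \<theta>inf \<theta>binf
                     (zpred m \<theta>binf (init_mean n (\<alpha> n) (M n) (x1 n))))
                  (lin_profile n (\<alpha> n) (\<theta> n) (\<theta>b n)) t0) \<longlonglongrightarrow> 0"
      using lqs.gap_conv[OF L1 t0] lqs.gap_conv[OF L2 t0]
      unfolding lqs.gN_def[OF L1] lqs.gL_def[OF L1] lqs.zz_def[OF L1]
        lqs.gN_def[OF L2] lqs.gL_def[OF L2] lqs.zz_def[OF L2]
      by simp
  qed
qed

end
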